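(* Let $\alpha>1$, $f\in SR_\alpha$, $b<\alpha$ and $k\in SR_b$. (i) There is $r_o>0$ such that for every $\Lambda>r_o$ the equation \[ g(\Lambda)f'(g(\Lambda))-f(g(\Lambda))+k(g(\Lambda))=\ln\Lambda \] has a unique solution $g\in SR_0$. Moreover, the function $h:(\ln r_o,\infty)\to\mathbb{R}$, $h(\Lambda)=g(\exp(\Lambda))$, belongs to $SR_{1/\alpha}$. (ii) For each $\gamma>0$ and $\delta>0$ there is $z>r_o$ such that for every $\Lambda>z$ and every $y\in[(\ln\Lambda)^{-\gamma},(\ln\Lambda)^{\gamma}]$, \[ \Big|g(\Lambda)\big[f'(g(y\Lambda))-f'(g(\Lambda))\big]-\ln y\Big|\le\delta|\ln y|. \] (iii) $\displaystyle\lim_{\Lambda\to\infty}\frac{g'(\Lambda)\Lambda\ln\Lambda}{g(\Lambda)}=\frac1\alpha$, $\displaystyle\lim_{\Lambda\to\infty}\frac{f(g(\Lambda))}{\ln\Lambda}=\frac1{\alpha-1}$, $\displaystyle\lim_{\Lambda\to\infty}\frac{g(\Lambda)f'(g(\Lambda))}{\ln\Lambda}=\frac{\alpha}{\alpha-1}$, and $\displaystyle\lim_{\Lambda\to\infty}\frac{g(\Lambda)f'(g(\Lambda))-f(g(\Lambda))}{\ln\Lambda}=1$. (iv) Let $k_0,k_1\in SR_b$ be such that $c:=\lim_{\Lambda\to\infty}(k_1(\Lambda)-k_0(\Lambda))\in\mathbb{R}$, and for $i\in\{0,1\}$ let $g_i$ be the unique solution of $g_i(\Lambda)f'(g_i(\Lambda))-f(g_i(\Lambda))+k_i(g_i(\Lambda))=\ln\Lambda$.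 Then for $i\in\{0,1\}$, \[ \lim_{\Lambda\to\infty}g_i(\Lambda)\big(f'(g_0(\Lambda))-f'(g_1(\Lambda))\big)=c. \]
   Context: A function $f:(z,\infty)\to\mathbb{R}$ is in $SR_\alpha$ (smoothly regularly varying with index $\alpha$) if $f$ is $C^\infty$, $z_o:=\max\{1,\sup\{\Lambda\ge z:f(\Lambda)\le0\}\}<\infty$, and $h(u):=\ln f(e^u)$ on $(\ln z_o,\infty)$ satisfies $h'(u)\to\alpha$ and $h^{(m)}(u)\to0$ for $m\ge2$ as $u\to\infty$. *)

theory Defs
  imports "HOL-Analysis.Analysis"
begin

definition smooth_on_set :: "real set \<Rightarrow> (real \<Rightarrow> real) \<Rightarrow> bool" where
  "smooth_on_set S f \<longleftrightarrow> (\<forall>m::nat. \<forall>x\<in>S. (deriv ^^ m) f differentiable (at x))"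

text \<open>The function is
  given on some interval (z, infinity); z_o < infinity means f is positive on a tail
  (beyond some z_o with z_o at least 1 and at least z); h u = ln (f (exp u)).\<close>
definition SR :: "real \<Rightarrow> (real \<Rightarrow> real) \<Rightarrow> bool" where
  "SR \<alpha> f \<longleftrightarrow> (\<exists>z zo. smooth_on_set {z<..} f \<and> zo \<ge> 1 \<and> zo \<ge> z \<and>
      (\<forall>x>zo. f x > 0) \<and>
      (let h = (\<lambda>u. ln (f (exp u))) in
        (deriv h \<longlongrightarrow> \<alpha>) at_top \<and>
        (\<forall>m::nat. m \<ge> 2 \<longrightarrow> ((deriv ^^ m) h \<longlongrightarrow> 0) at_top)))"

definition sol_eq :: "(real \<Rightarrow> real) \<Rightarrow> (real \<Rightarrow> real) \<Rightarrow> real \<Rightarrow> real \<Rightarrow> bool" where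
  "sol_eq f k \<Lambda> x \<longleftrightarrow> x * deriv f x - f x + k x = ln \<Lambda>"

definition is_sol :: "(real \<Rightarrow> real) \<Rightarrow> (real \<Rightarrow> real) \<Rightarrow> real \<Rightarrow> real \<Rightarrow> (real \<Rightarrow> real) \<Rightarrow> bool" where
  "is_sol f k r xo g \<longleftrightarrow> (\<forall>\<Lambda>>r. g \<Lambda> > xo \<and> sol_eq f k \<Lambda> (g \<Lambda>) \<and>
      (\<forall>x>xo. sol_eq f k \<Lambda> x \<longrightarrow> x = g \<Lambda>))"

end

theory Submission
  imports Defs
begin

definition Dm :: "nat \<Rightarrow> real set \<Rightarrow> (real \<Rightarrow> real) \<Rightarrow> bool" where
  "Dm m S u \<longleftrightarrow> (\<forall>j\<le>m. \<forall>x\<in>S. (deriv ^^ j) u differentiable (at x))"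

lemma Dm_Suc: "Dm (Suc m) S u \<longleftrightarrow> (\<forall>x\<in>S. u differentiable (at x)) \<and> Dm m S (deriv u)"
proof
  assume a: "Dm (Suc m) S u"
  have "\<forall>x\<in>S. u differentiable (at x)" using a unfolding Dm_def by (metis funpow_0 le0)
  moreover have "Dm m S (deriv u)" unfolding Dm_def
  proof (intro allI impI ballI)
    fix j x assume "j \<le> m" "x \<in> S"
    then have "(deriv ^^ Suc j) u differentiable (at x)" using a unfolding Dm_def by auto
    then show "(deriv ^^ j) (deriv u) differentiable (at x)" by (simp only: funpow_Suc_right o_def)
  qed
  ultimately show "(\<forall>x\<in>S. u differentiable (at x)) \<and> Dm m S (deriv u)" by blast
next
  assume a: "(\<forall>x\<in>S. u differentiable (at x)) \<and> Dm m S (deriv u)"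
  show "Dm (Suc m) S u" unfolding Dm_def
  proof (intro allI impI ballI)
    fix j x assume j: "j \<le> Suc m" and x: "x \<in> S"
    show "(deriv ^^ j) u differentiable (at x)"
    proof (cases j)
      case 0 then show ?thesis using a x by simp
    next
      case (Suc i)
      then have "(deriv ^^ i) (deriv u) differentiable (at x)" using a j x unfolding Dm_def by auto
      then show ?thesis using Suc by (simp only: funpow_Suc_right o_def)
    qed
  qed
qed

lemma Dm_0 [simp]: "Dm 0 S u \<longleftrightarrow> (\<forall>x\<in>S. u differentiable (at x))"
  unfolding Dm_def by auto

lemma Dm_mono: "Dm (Suc m) S u \<Longrightarrow> Dm m S u"
  unfolding Dm_def by auto

lemma smooth_Dm: "smooth_on_set S u \<longleftrightarrow> (\<forall>m. Dm m S u)"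
  unfolding smooth_on_set_def Dm_def by blast

lemma diff_DERIV: "(u::real\<Rightarrow>real) differentiable (at x) \<Longrightarrow> (u has_field_derivative deriv u x) (at x)"
  using DERIV_deriv_iff_real_differentiable by blast

lemma hd_cong_open:
  assumes "open S" "x \<in> S" "\<And>y. y \<in> S \<Longrightarrow> u y = v y"
  shows "(deriv ^^ j) u x = (deriv ^^ j) v x"
proof -
  have "eventually (\<lambda>y. u y = v y) (nhds x)"
    using assms unfolding eventually_nhds by blast
  then show ?thesis by (rule higher_deriv_cong_ev) simp
qed

lemma diff_cong_open:
  assumes "open S" "x \<in> S" "\<And>y. y \<in> S \<Longrightarrow> u y = v y" "(u::real\<Rightarrow>real) differentiable (at x)"
  shows "v differentiable (at x)"
proof -
  have "(v has_field_derivative deriv u x) (at x)"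
    using has_field_derivative_transform_within_open[OF diff_DERIV[OF assms(4)] assms(1,2)] assms(3) by blast
  then show ?thesis unfolding real_differentiable_def by blast
qed

lemma Dm_cong:
  assumes "open S" "\<And>y. y \<in> S \<Longrightarrow> u y = v y" "Dm m S u"
  shows "Dm m S v"
  unfolding Dm_def
proof (intro allI impI ballI)
  fix j x assume "j \<le> m" "x \<in> S"
  then have d: "(deriv ^^ j) u differentiable (at x)" using assms unfolding Dm_def by auto
  show "(deriv ^^ j) v differentiable (at x)"
    by (rule diff_cong_open[OF assms(1) \<open>x\<in>S\<close> _ d]) (rule hd_cong_open[OF assms(1) _ assms(2)])
qed

lemma DERIVdf: "((f::real\<Rightarrow>real) has_field_derivative D) (at x) \<Longrightarrow> f differentiable (at x)"
  unfolding real_differentiable_def by blast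

lemma Dm_const: "Dm m S (\<lambda>x. c)"
proof (induction m arbitrary: c)
  case 0 then show ?case by simp
next
  case (Suc m)
  have "deriv (\<lambda>x. c) = (\<lambda>x. 0)" by simp
  then show ?case using Suc[of 0] unfolding Dm_Suc by simp
qed

lemma Dm_add:
  assumes "open S" "Dm m S u" "Dm m S v"
  shows "Dm m S (\<lambda>x. u x + v x)"
  using assms(2,3)
proof (induction m arbitrary: u v)
  case 0 then show ?case by auto
next
  case (Suc m)
  have du: "\<forall>x\<in>S. u differentiable (at x)" "Dm m S (deriv u)" using Suc.prems(1) unfolding Dm_Suc by auto
  have dv: "\<forall>x\<in>S. v differentiable (at x)" "Dm m S (deriv v)" using Suc.prems(2) unfolding Dm_Suc by auto
  have h: "Dm m S (\<lambda>x. deriv u x + deriv v x)" by (rule Suc.IH[OF du(2) dv(2)])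
  have e: "\<And>y. y \<in> S \<Longrightarrow> deriv u y + deriv v y = deriv (\<lambda>x. u x + v x) y"
  proof -
    fix y assume "y \<in> S"
    then have "((\<lambda>x. u x + v x) has_field_derivative deriv u y + deriv v y) (at y)"
      using du dv by (intro DERIV_add diff_DERIV) auto
    then show "deriv u y + deriv v y = deriv (\<lambda>x. u x + v x) y" by (rule DERIV_imp_deriv[symmetric])
  qed
  have "Dm m S (deriv (\<lambda>x. u x + v x))" by (rule Dm_cong[OF assms(1) e h])
  moreover have "\<forall>x\<in>S. (\<lambda>x. u x + v x) differentiable (at x)" using du dv by auto
  ultimately show ?case unfolding Dm_Suc by blast
qed

lemma Dm_mult:
  assumes "open S" "Dm m S u" "Dm m S v"
  shows "Dm m S (\<lambda>x. u x * v x)"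
  using assms(2,3)
proof (induction m arbitrary: u v)
  case 0 then show ?case by auto
next
  case (Suc m)
  have du: "\<forall>x\<in>S. u differentiable (at x)" "Dm m S (deriv u)" using Suc.prems(1) unfolding Dm_Suc by auto
  have dv: "\<forall>x\<in>S. v differentiable (at x)" "Dm m S (deriv v)" using Suc.prems(2) unfolding Dm_Suc by auto
  have h1: "Dm m S (\<lambda>x. deriv u x * v x)" by (rule Suc.IH[OF du(2) Dm_mono[OF Suc.prems(2)]])
  have h2: "Dm m S (\<lambda>x. u x * deriv v x)" by (rule Suc.IH[OF Dm_mono[OF Suc.prems(1)] dv(2)])
  have h: "Dm m S (\<lambda>x. deriv u x * v x + u x * deriv v x)" by (rule Dm_add[OF assms(1) h1 h2])
  have e: "\<And>y. y \<in> S \<Longrightarrow> deriv u y * v y + u y * deriv v y = deriv (\<lambda>x. u x * v x) y"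
  proof -
    fix y assume "y \<in> S"
    then have d: "((\<lambda>x. u x * v x) has_field_derivative deriv u y * v y + deriv v y * u y) (at y)"
      using du dv by (intro DERIV_mult diff_DERIV) auto
    show "deriv u y * v y + u y * deriv v y = deriv (\<lambda>x. u x * v x) y"
      using DERIV_imp_deriv[OF d] by (simp add: algebra_simps)
  qed
  have "Dm m S (deriv (\<lambda>x. u x * v x))" by (rule Dm_cong[OF assms(1) e h])
  moreover have "\<forall>x\<in>S. (\<lambda>x. u x * v x) differentiable (at x)" using du dv by auto
  ultimately show ?case unfolding Dm_Suc by blast
qed

lemma smooth_deriv: assumes "smooth_on_set U F" shows "smooth_on_set U (deriv F)"
  unfolding smooth_Dm
proof
  fix m
  have "Dm (Suc m) U F" using assms unfolding smooth_Dm by blast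
  then show "Dm m U (deriv F)" unfolding Dm_Suc by blast
qed

lemma smooth_diff: "smooth_on_set U F \<Longrightarrow> x \<in> U \<Longrightarrow> F differentiable (at x)"
  unfolding smooth_on_set_def by (metis funpow_0)

lemma diff_comp: "(G::real\<Rightarrow>real) differentiable (at x) \<Longrightarrow> (F::real\<Rightarrow>real) differentiable (at (G x)) \<Longrightarrow> (\<lambda>x. F (G x)) differentiable (at x)"
  using differentiable_chain_at[of G x F] unfolding o_def by blast

lemma Dm_comp:
  assumes "open S" "open U" "Dm m S G" "\<And>x. x \<in> S \<Longrightarrow> G x \<in> U" "smooth_on_set U F"
  shows "Dm m S (\<lambda>x. F (G x))"
  using assms(3,5)
proof (induction m arbitrary: F)
  case 0
  show ?case unfolding Dm_0
  proof
    fix x assume x: "x \<in> S"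
    show "(\<lambda>x. F (G x)) differentiable (at x)"
      by (rule diff_comp) (use 0 x assms(4) smooth_diff in auto)
  qed
next
  case (Suc m)
  have dG: "\<forall>x\<in>S. G differentiable (at x)" "Dm m S (deriv G)" using Suc.prems(1) unfolding Dm_Suc by auto
  have dF: "\<forall>x\<in>U. F differentiable (at x)" "smooth_on_set U (deriv F)"
    using Suc.prems(2) smooth_deriv smooth_diff by auto
  have "Dm m S (\<lambda>x. deriv F (G x))" by (rule Suc.IH[OF Dm_mono[OF Suc.prems(1)] dF(2)])
  then have h: "Dm m S (\<lambda>x. deriv F (G x) * deriv G x)" by (rule Dm_mult[OF assms(1) _ dG(2)])
  have e: "\<And>y. y \<in> S \<Longrightarrow> deriv F (G y) * deriv G y = deriv (\<lambda>x. F (G x)) y"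
  proof -
    fix y assume y: "y \<in> S"
    have "((\<lambda>x. F (G x)) has_field_derivative deriv F (G y) * deriv G y) (at y)"
      by (rule DERIV_chain2[OF diff_DERIV diff_DERIV]) (use dF dG y assms(4) in auto)
    then show "deriv F (G y) * deriv G y = deriv (\<lambda>x. F (G x)) y" by (rule DERIV_imp_deriv[symmetric])
  qed
  have "Dm m S (deriv (\<lambda>x. F (G x)))" by (rule Dm_cong[OF assms(1) e h])
  moreover have "\<forall>x\<in>S. (\<lambda>x. F (G x)) differentiable (at x)"
    using dF dG assms(4) diff_comp by blast
  ultimately show ?case unfolding Dm_Suc by blast
qed

lemma smooth_comp:
  assumes "open S" "open U" "smooth_on_set S G" "\<And>x. x \<in> S \<Longrightarrow> G x \<in> U" "smooth_on_set U F"
  shows "smooth_on_set S (\<lambda>x. F (G x))"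
  unfolding smooth_Dm
proof
  fix m show "Dm m S (\<lambda>x. F (G x))"
    by (rule Dm_comp[OF assms(1,2) _ assms(4,5)]) (use assms(3) smooth_Dm in blast)
qed

lemma smooth_add: assumes "open S" "smooth_on_set S u" "smooth_on_set S v" shows "smooth_on_set S (\<lambda>x. u x + v x)"
  unfolding smooth_Dm
proof
  fix m show "Dm m S (\<lambda>x. u x + v x)"
    by (rule Dm_add[OF assms(1)]) (use assms(2,3) smooth_Dm in blast)+
qed

lemma smooth_mult: assumes "open S" "smooth_on_set S u" "smooth_on_set S v" shows "smooth_on_set S (\<lambda>x. u x * v x)"
  unfolding smooth_Dm
proof
  fix m show "Dm m S (\<lambda>x. u x * v x)"
    by (rule Dm_mult[OF assms(1)]) (use assms(2,3) smooth_Dm in blast)+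
qed

lemma smooth_const: "smooth_on_set S (\<lambda>x. c)"
  unfolding smooth_Dm using Dm_const by blast

lemma deriv_exp_eq: "deriv exp = (exp :: real \<Rightarrow> real)"
proof
  fix x :: real show "deriv exp x = exp x" by (rule DERIV_imp_deriv) (rule DERIV_exp)
qed

lemma hd_exp: "(deriv ^^ m) exp = (exp :: real \<Rightarrow> real)"
proof (induction m)
  case 0 show ?case by simp
next
  case (Suc m) show ?case by (simp only: funpow.simps(2) o_def Suc deriv_exp_eq)
qed

lemma smooth_exp: "smooth_on_set S exp"
  unfolding smooth_on_set_def hd_exp by (auto intro!: DERIVdf DERIV_exp)

lemma Dm_inverse: "Dm m {0<..} (inverse :: real \<Rightarrow> real)"
proof (induction m)
  case 0 then show ?case by (auto intro!: DERIVdf DERIV_inverse)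
next
  case (Suc m)
  have h: "Dm m {0<..} (\<lambda>x. (-1) * (inverse x * inverse (x::real)))"
    by (rule Dm_mult[OF _ Dm_const Dm_mult[OF _ Suc Suc]]) simp_all
  have e: "\<And>y. y \<in> {0<..} \<Longrightarrow> (-1) * (inverse y * inverse y) = deriv inverse (y::real)"
    by (rule DERIV_imp_deriv[symmetric]) (auto intro!: derivative_eq_intros simp: power2_eq_square)
  have "Dm m {0<..} (deriv inverse)" by (rule Dm_cong[OF _ e h]) simp
  moreover have "\<forall>x\<in>{0::real<..}. inverse differentiable (at x)"
    by (auto intro!: DERIVdf DERIV_inverse)
  ultimately show ?case unfolding Dm_Suc by blast
qed

lemma smooth_inverse: "smooth_on_set {0<..} (inverse :: real \<Rightarrow> real)"
  unfolding smooth_Dm using Dm_inverse by blast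

lemma smooth_ln: "smooth_on_set {0<..} (ln :: real \<Rightarrow> real)"
  unfolding smooth_Dm
proof
  fix m
  show "Dm m {0<..} ln"
  proof (cases m)
    case 0 then show ?thesis by (auto intro!: DERIVdf DERIV_ln)
  next
    case (Suc n)
    have e: "\<And>y. y \<in> {0<..} \<Longrightarrow> inverse y = deriv ln (y::real)"
      by (rule DERIV_imp_deriv[symmetric]) (auto intro!: derivative_eq_intros simp: field_simps)
    have "Dm n {0<..} (deriv ln)" by (rule Dm_cong[OF _ e Dm_inverse]) simp
    moreover have "\<forall>x\<in>{0::real<..}. ln differentiable (at x)"
      by (auto intro!: DERIVdf DERIV_ln)
    ultimately show ?thesis unfolding Suc Dm_Suc by blast
  qed
qed

lemma smooth_subset: "smooth_on_set S u \<Longrightarrow> T \<subseteq> S \<Longrightarrow> smooth_on_set T u"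
  unfolding smooth_on_set_def by blast

lemma smooth_cong: assumes "open S" "\<And>y. y \<in> S \<Longrightarrow> u y = v y" "smooth_on_set S u" shows "smooth_on_set S v"
  unfolding smooth_Dm
proof
  fix m have d: "Dm m S u" using assms(3) unfolding smooth_Dm by blast
  have e: "\<And>y. y \<in> S \<Longrightarrow> u y = v y" by (rule assms(2))
  show "Dm m S v" by (rule Dm_cong[OF assms(1) e d])
qed

definition sm :: "(real \<Rightarrow> real) \<Rightarrow> bool" where
  "sm u \<longleftrightarrow> (\<exists>a. smooth_on_set {a<..} u)"

lemma sm_ev_diff: assumes "sm u" shows "eventually (\<lambda>x. u differentiable (at x)) at_top"
proof -
  obtain a where a: "smooth_on_set {a<..} u" using assms sm_def by blast
  show ?thesis using eventually_gt_at_top[of a] by eventually_elim (use a smooth_diff in auto)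
qed

lemma sm_deriv: "sm u \<Longrightarrow> sm (deriv u)"
  unfolding sm_def using smooth_deriv by blast

lemma sm_tail: assumes "sm u" obtains a where "\<And>b. b \<ge> a \<Longrightarrow> smooth_on_set {b<..} u"
proof -
  obtain a where a: "smooth_on_set {a<..} u" using assms sm_def by blast
  have "smooth_on_set {b<..} u" if "b \<ge> a" for b by (rule smooth_subset[OF a]) (use that in auto)
  then show ?thesis using that by blast
qed

lemma sm_add: assumes "sm u" "sm v" shows "sm (\<lambda>x. u x + v x)"
proof -
  obtain a where a: "\<And>b. b \<ge> a \<Longrightarrow> smooth_on_set {b<..} u" using sm_tail[OF assms(1)] by blast
  obtain a' where a': "\<And>b. b \<ge> a' \<Longrightarrow> smooth_on_set {b<..} v" using sm_tail[OF assms(2)] by blast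
  have "smooth_on_set {max a a'<..} (\<lambda>x. u x + v x)"
    by (rule smooth_add) (use a a' in auto)
  then show ?thesis unfolding sm_def by blast
qed

lemma sm_mult: assumes "sm u" "sm v" shows "sm (\<lambda>x. u x * v x)"
proof -
  obtain a where a: "\<And>b. b \<ge> a \<Longrightarrow> smooth_on_set {b<..} u" using sm_tail[OF assms(1)] by blast
  obtain a' where a': "\<And>b. b \<ge> a' \<Longrightarrow> smooth_on_set {b<..} v" using sm_tail[OF assms(2)] by blast
  have "smooth_on_set {max a a'<..} (\<lambda>x. u x * v x)"
    by (rule smooth_mult) (use a a' in auto)
  then show ?thesis unfolding sm_def by blast
qed

lemma sm_const: "sm (\<lambda>x. c)"
  unfolding sm_def using smooth_const by blast

lemma sm_comp:
  assumes "sm G" "open U" "smooth_on_set U F" "eventually (\<lambda>x. G x \<in> U) at_top"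
  shows "sm (\<lambda>x. F (G x))"
proof -
  obtain a where a: "\<And>b. b \<ge> a \<Longrightarrow> smooth_on_set {b<..} G" using sm_tail[OF assms(1)] by blast
  obtain a' where a': "\<And>x. x \<ge> a' \<Longrightarrow> G x \<in> U" using assms(4) unfolding eventually_at_top_linorder by blast
  have "smooth_on_set {max a a'<..} (\<lambda>x. F (G x))"
    by (rule smooth_comp[OF _ assms(2) a _ assms(3)]) (use a' in auto)
  then show ?thesis unfolding sm_def by blast
qed

lemma sm_cong_ev: assumes "sm u" "eventually (\<lambda>x. u x = v x) at_top" shows "sm v"
proof -
  obtain a where a: "\<And>b. b \<ge> a \<Longrightarrow> smooth_on_set {b<..} u" using sm_tail[OF assms(1)] by blast
  obtain a' where a': "\<forall>x\<ge>a'. u x = v x" using assms(2) unfolding eventually_at_top_linorder by blast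
  have "smooth_on_set {max a a'<..} v"
    by (rule smooth_cong[OF _ _ a]) (use a' in auto)
  then show ?thesis unfolding sm_def by blast
qed

lemma ev_hd: fixes u v :: "real \<Rightarrow> real" assumes "eventually (\<lambda>x. u x = v x) at_top"
  shows "eventually (\<lambda>x. (deriv ^^ j) u x = (deriv ^^ j) v x) at_top"
proof -
  obtain a' where a': "\<forall>x\<ge>a'. u x = v x" using assms unfolding eventually_at_top_linorder by blast
  show ?thesis using eventually_gt_at_top[of a']
  proof eventually_elim
    case (elim x)
    show ?case by (rule hd_cong_open[of "{a'<..}"]) (use elim a' in auto)
  qed
qed

lemma ev_deriv: fixes u v :: "real \<Rightarrow> real" assumes "eventually (\<lambda>x. u x = v x) at_top"
  shows "eventually (\<lambda>x. deriv u x = deriv v x) at_top"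
  using ev_hd[OF assms, of 1] by simp

lemma ev_deriv_add: assumes "sm u" "sm v"
  shows "eventually (\<lambda>x. deriv (\<lambda>x. u x + v x) x = deriv u x + deriv v x) at_top"
  using sm_ev_diff[OF assms(1)] sm_ev_diff[OF assms(2)]
  by eventually_elim (rule DERIV_imp_deriv, intro DERIV_add diff_DERIV, auto)

lemma ev_deriv_mult: assumes "sm u" "sm v"
  shows "eventually (\<lambda>x. deriv (\<lambda>x. u x * v x) x = deriv u x * v x + u x * deriv v x) at_top"
  using sm_ev_diff[OF assms(1)] sm_ev_diff[OF assms(2)]
proof eventually_elim
  case (elim x)
  have "((\<lambda>x. u x * v x) has_field_derivative deriv u x * v x + deriv v x * u x) (at x)"
    by (intro DERIV_mult diff_DERIV elim)
  from DERIV_imp_deriv[OF this] show ?case by (simp add: algebra_simps)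
qed

lemma ev_deriv_comp: assumes "sm G" "open U" "smooth_on_set U F" "eventually (\<lambda>x. G x \<in> U) at_top"
  shows "eventually (\<lambda>x. deriv (\<lambda>x. F (G x)) x = deriv F (G x) * deriv G x) at_top"
  using sm_ev_diff[OF assms(1)] assms(4)
proof eventually_elim
  case (elim x)
  have "((\<lambda>x. F (G x)) has_field_derivative deriv F (G x) * deriv G x) (at x)"
    by (rule DERIV_chain2[OF diff_DERIV diff_DERIV]) (use elim assms(3) smooth_diff in auto)
  from DERIV_imp_deriv[OF this] show ?case .
qed

definition Tm :: "nat \<Rightarrow> (real \<Rightarrow> real) \<Rightarrow> bool" where
  "Tm m u \<longleftrightarrow> (\<forall>j. 1 \<le> j \<and> j \<le> m \<longrightarrow> (((deriv ^^ j) u \<longlongrightarrow> 0) at_top))"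

lemma Tm_0 [simp]: "Tm 0 u" unfolding Tm_def by auto

lemma Tm_Suc: "Tm (Suc m) u \<longleftrightarrow> ((deriv u \<longlongrightarrow> 0) at_top) \<and> Tm m (deriv u)"
proof
  assume a: "Tm (Suc m) u"
  have "(deriv u \<longlongrightarrow> 0) at_top" using a[unfolded Tm_def, rule_format, of 1] by simp
  moreover have "Tm m (deriv u)" unfolding Tm_def
  proof (intro allI impI)
    fix j assume "1 \<le> j \<and> j \<le> m"
    then have "((deriv ^^ Suc j) u \<longlongrightarrow> 0) at_top" using a unfolding Tm_def by auto
    then show "((deriv ^^ j) (deriv u) \<longlongrightarrow> 0) at_top" by (simp only: funpow_Suc_right o_def)
  qed
  ultimately show "((deriv u \<longlongrightarrow> 0) at_top) \<and> Tm m (deriv u)" by blast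
next
  assume a: "((deriv u \<longlongrightarrow> 0) at_top) \<and> Tm m (deriv u)"
  show "Tm (Suc m) u" unfolding Tm_def
  proof (intro allI impI)
    fix j assume j: "1 \<le> j \<and> j \<le> Suc m"
    then obtain i where i: "j = Suc i" by (cases j) auto
    show "((deriv ^^ j) u \<longlongrightarrow> 0) at_top"
    proof (cases i)
      case 0 then show ?thesis using a i by simp
    next
      case (Suc i')
      then have "((deriv ^^ i) (deriv u) \<longlongrightarrow> 0) at_top" using a j i unfolding Tm_def by auto
      then show ?thesis unfolding i by (simp only: funpow_Suc_right o_def)
    qed
  qed
qed

lemma Tm_mono: "Tm (Suc m) u \<Longrightarrow> Tm m u" unfolding Tm_def by auto

lemma Tm_cong_ev: fixes u v :: "real \<Rightarrow> real" assumes "eventually (\<lambda>x. u x = v x) at_top" "Tm m u" shows "Tm m v"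
  unfolding Tm_def
proof (intro allI impI)
  fix j assume "1 \<le> j \<and> j \<le> m"
  then have "((deriv ^^ j) u \<longlongrightarrow> 0) at_top" using assms(2) unfolding Tm_def by auto
  then show "((deriv ^^ j) v \<longlongrightarrow> 0) at_top" using tendsto_cong[OF ev_hd[OF assms(1)]] by blast
qed

lemma Tm_const: "Tm m (\<lambda>x. c)"
proof (induction m arbitrary: c)
  case 0 then show ?case by simp
next
  case (Suc m)
  have "deriv (\<lambda>x. c) = (\<lambda>x. 0)" by simp
  then show ?case unfolding Tm_Suc using Suc[of 0] by simp
qed

lemma Tm_add: assumes "sm u" "sm v" "Tm m u" "Tm m v" shows "Tm m (\<lambda>x. u x + v x)"
  using assms
proof (induction m arbitrary: u v)
  case 0 then show ?case by simp
next
  case (Suc m)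
  have u: "(deriv u \<longlongrightarrow> 0) at_top" "Tm m (deriv u)" using Suc.prems(3) unfolding Tm_Suc by auto
  have v: "(deriv v \<longlongrightarrow> 0) at_top" "Tm m (deriv v)" using Suc.prems(4) unfolding Tm_Suc by auto
  have e: "eventually (\<lambda>x. deriv u x + deriv v x = deriv (\<lambda>x. u x + v x) x) at_top"
    using ev_deriv_add[OF Suc.prems(1,2)] by (simp add: eq_commute)
  have "((\<lambda>x. deriv u x + deriv v x) \<longlongrightarrow> 0) at_top" using tendsto_add[OF u(1) v(1)] by simp
  then have l: "(deriv (\<lambda>x. u x + v x) \<longlongrightarrow> 0) at_top" using tendsto_cong[OF e] by blast
  have "Tm m (\<lambda>x. deriv u x + deriv v x)"
    by (rule Suc.IH[OF sm_deriv[OF Suc.prems(1)] sm_deriv[OF Suc.prems(2)] u(2) v(2)])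
  then have "Tm m (deriv (\<lambda>x. u x + v x))" by (rule Tm_cong_ev[OF e])
  with l show ?case unfolding Tm_Suc by blast
qed

lemma Tm_mult: assumes "sm u" "sm v" "(u \<longlongrightarrow> a) at_top" "(v \<longlongrightarrow> b) at_top" "Tm m u" "Tm m v"
  shows "Tm m (\<lambda>x. u x * v x)"
  using assms
proof (induction m arbitrary: u v a b)
  case 0 then show ?case by simp
next
  case (Suc m)
  have u: "(deriv u \<longlongrightarrow> 0) at_top" "Tm m (deriv u)" using Suc.prems(5) unfolding Tm_Suc by auto
  have v: "(deriv v \<longlongrightarrow> 0) at_top" "Tm m (deriv v)" using Suc.prems(6) unfolding Tm_Suc by auto
  have e: "eventually (\<lambda>x. deriv u x * v x + u x * deriv v x = deriv (\<lambda>x. u x * v x) x) at_top"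
    using ev_deriv_mult[OF Suc.prems(1,2)] by (simp add: eq_commute)
  have "((\<lambda>x. deriv u x * v x + u x * deriv v x) \<longlongrightarrow> 0 * b + a * 0) at_top"
    by (intro tendsto_add tendsto_mult u(1) v(1) Suc.prems(3,4))
  then have l: "(deriv (\<lambda>x. u x * v x) \<longlongrightarrow> 0) at_top" using tendsto_cong[OF e] by simp
  have t1: "Tm m (\<lambda>x. deriv u x * v x)"
    by (rule Suc.IH[OF sm_deriv[OF Suc.prems(1)] Suc.prems(2) u(1) Suc.prems(4) u(2) Tm_mono[OF Suc.prems(6)]])
  have t2: "Tm m (\<lambda>x. u x * deriv v x)"
    by (rule Suc.IH[OF Suc.prems(1) sm_deriv[OF Suc.prems(2)] Suc.prems(3) v(1) Tm_mono[OF Suc.prems(5)] v(2)])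
  have "Tm m (\<lambda>x. deriv u x * v x + u x * deriv v x)"
    by (rule Tm_add[OF sm_mult[OF sm_deriv[OF Suc.prems(1)] Suc.prems(2)] sm_mult[OF Suc.prems(1) sm_deriv[OF Suc.prems(2)]] t1 t2])
  then have "Tm m (deriv (\<lambda>x. u x * v x))" by (rule Tm_cong_ev[OF e])
  with l show ?case unfolding Tm_Suc by blast
qed

lemma Tm_cmult: assumes "sm u" "(u \<longlongrightarrow> a) at_top" "Tm m u" shows "Tm m (\<lambda>x. c * u x)"
  by (rule Tm_mult[OF sm_const assms(1) tendsto_const assms(2) Tm_const assms(3)])

lemma Tm_diff: assumes "sm u" "sm v" "Tm m u" "Tm m v" "(v \<longlongrightarrow> b) at_top" shows "Tm m (\<lambda>x. u x - v x)"
proof -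
  have "Tm m (\<lambda>x. u x + (-1) * v x)"
    by (rule Tm_add[OF assms(1) sm_mult[OF sm_const assms(2)] assms(3) Tm_cmult[OF assms(2,5,4)]])
  then show ?thesis by simp
qed

lemma ev_gt_filterlim: "filterlim G at_top at_top \<Longrightarrow> eventually (\<lambda>x. (a::real) < G x) at_top"
  unfolding filterlim_at_top_dense by blast

lemma sm_comp_top: assumes "sm q" "filterlim G at_top at_top" "sm G" shows "sm (\<lambda>x. q (G x))"
proof -
  obtain a where a: "smooth_on_set {a<..} q" using assms(1) sm_def by blast
  show ?thesis by (rule sm_comp[OF assms(3) _ a]) (use ev_gt_filterlim[OF assms(2)] in auto)
qed

lemma ev_deriv_comp_top: assumes "sm q" "filterlim G at_top at_top" "sm G"
  shows "eventually (\<lambda>x. deriv (\<lambda>x. q (G x)) x = deriv q (G x) * deriv G x) at_top"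
proof -
  obtain a where a: "smooth_on_set {a<..} q" using assms(1) sm_def by blast
  show ?thesis by (rule ev_deriv_comp[OF assms(3) _ a]) (use ev_gt_filterlim[OF assms(2)] in auto)
qed

lemma Tm_comp_smooth:
  assumes "sm \<psi>" "(\<psi> \<longlongrightarrow> c) at_top" "open U" "c \<in> U" "smooth_on_set U Fn" "Tm m \<psi>"
  shows "Tm m (\<lambda>x. Fn (\<psi> x))"
  using assms(5,6)
proof (induction m arbitrary: Fn)
  case 0 then show ?case by simp
next
  case (Suc m)
  have p: "(deriv \<psi> \<longlongrightarrow> 0) at_top" "Tm m (deriv \<psi>)" using Suc.prems(2) unfolding Tm_Suc by auto
  have evU: "eventually (\<lambda>x. \<psi> x \<in> U) at_top" by (rule topological_tendstoD[OF assms(2) assms(3,4)])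
  have e: "eventually (\<lambda>x. deriv Fn (\<psi> x) * deriv \<psi> x = deriv (\<lambda>x. Fn (\<psi> x)) x) at_top"
    using ev_deriv_comp[OF assms(1,3) Suc.prems(1) evU] by (simp add: eq_commute)
  have sd: "smooth_on_set U (deriv Fn)" by (rule smooth_deriv[OF Suc.prems(1)])
  have "deriv Fn differentiable (at c)" by (rule smooth_diff[OF sd assms(4)])
  then have cont: "isCont (deriv Fn) c" by (rule differentiable_imp_continuous_within)
  have lim1: "((\<lambda>x. deriv Fn (\<psi> x)) \<longlongrightarrow> deriv Fn c) at_top" by (rule isCont_tendsto_compose[OF cont assms(2)])
  have "((\<lambda>x. deriv Fn (\<psi> x) * deriv \<psi> x) \<longlongrightarrow> deriv Fn c * 0) at_top" by (rule tendsto_mult[OF lim1 p(1)])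
  then have l: "(deriv (\<lambda>x. Fn (\<psi> x)) \<longlongrightarrow> 0) at_top" using tendsto_cong[OF e] by simp
  have ih: "Tm m (\<lambda>x. deriv Fn (\<psi> x))" by (rule Suc.IH[OF sd Tm_mono[OF Suc.prems(2)]])
  have "Tm m (\<lambda>x. deriv Fn (\<psi> x) * deriv \<psi> x)"
    by (rule Tm_mult[OF sm_comp[OF assms(1,3) sd evU] sm_deriv[OF assms(1)] lim1 p(1) ih p(2)])
  then have "Tm m (deriv (\<lambda>x. Fn (\<psi> x)))" by (rule Tm_cong_ev[OF e])
  with l show ?case unfolding Tm_Suc by blast
qed

lemma Tm_comp_top:
  assumes "filterlim G at_top at_top" "sm G" "(deriv G \<longlongrightarrow> d) at_top" "\<forall>n. Tm n (deriv G)" "sm q" "Tm m q"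
  shows "Tm m (\<lambda>x. q (G x))"
  using assms(5,6)
proof (induction m arbitrary: q)
  case 0 then show ?case by simp
next
  case (Suc m)
  have p: "(deriv q \<longlongrightarrow> 0) at_top" "Tm m (deriv q)" using Suc.prems(2) unfolding Tm_Suc by auto
  have e: "eventually (\<lambda>x. deriv q (G x) * deriv G x = deriv (\<lambda>x. q (G x)) x) at_top"
    using ev_deriv_comp_top[OF Suc.prems(1) assms(1,2)] by (simp add: eq_commute)
  have lim1: "((\<lambda>x. deriv q (G x)) \<longlongrightarrow> 0) at_top" by (rule filterlim_compose[OF p(1) assms(1)])
  have "((\<lambda>x. deriv q (G x) * deriv G x) \<longlongrightarrow> 0 * d) at_top" by (rule tendsto_mult[OF lim1 assms(3)])
  then have l: "(deriv (\<lambda>x. q (G x)) \<longlongrightarrow> 0) at_top" using tendsto_cong[OF e] by simp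
  have ih: "Tm m (\<lambda>x. deriv q (G x))" by (rule Suc.IH[OF sm_deriv[OF Suc.prems(1)] p(2)])
  have "Tm m (\<lambda>x. deriv q (G x) * deriv G x)"
    by (rule Tm_mult[OF sm_comp_top[OF sm_deriv[OF Suc.prems(1)] assms(1,2)] sm_deriv[OF assms(2)] lim1 assms(3) ih])
       (use assms(4) in blast)
  then have "Tm m (deriv (\<lambda>x. q (G x)))" by (rule Tm_cong_ev[OF e])
  with l show ?case unfolding Tm_Suc by blast
qed

lemma Tm_inv_fun:
  assumes "filterlim H at_top at_top" "sm H" "sm R" "(R \<longlongrightarrow> r) at_top" "\<forall>n. Tm n R"
    "eventually (\<lambda>w. deriv H w = R (H w)) at_top"
  shows "sm q \<Longrightarrow> (q \<longlongrightarrow> c) at_top \<Longrightarrow> \<forall>n. Tm n q \<Longrightarrow> Tm m (\<lambda>w. q (H w))"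
proof (induction m arbitrary: q c)
  case 0 then show ?case by simp
next
  case (Suc m)
  define \<phi> where "\<phi> = (\<lambda>s. deriv q s * R s)"
  have d1: "(deriv q \<longlongrightarrow> 0) at_top" using Suc.prems(3)[THEN spec, of "Suc 0"] unfolding Tm_Suc by blast
  have sphi: "sm \<phi>" unfolding \<phi>_def by (rule sm_mult[OF sm_deriv[OF Suc.prems(1)] assms(3)])
  have lphi: "(\<phi> \<longlongrightarrow> 0) at_top" unfolding \<phi>_def using tendsto_mult[OF d1 assms(4)] by simp
  have tphi: "\<forall>n. Tm n \<phi>"
  proof
    fix n
    have "Tm n (deriv q)" using Suc.prems(3)[THEN spec, of "Suc n"] unfolding Tm_Suc by blast
    then show "Tm n \<phi>" unfolding \<phi>_def
      by (rule Tm_mult[OF sm_deriv[OF Suc.prems(1)] assms(3) d1 assms(4)]) (use assms(5) in blast)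
  qed
  have e: "eventually (\<lambda>w. \<phi> (H w) = deriv (\<lambda>w. q (H w)) w) at_top"
    using ev_deriv_comp_top[OF Suc.prems(1) assms(1,2)] assms(6)
    by eventually_elim (simp add: \<phi>_def)
  have "((\<lambda>w. \<phi> (H w)) \<longlongrightarrow> 0) at_top" by (rule filterlim_compose[OF lphi assms(1)])
  then have l: "(deriv (\<lambda>w. q (H w)) \<longlongrightarrow> 0) at_top" using tendsto_cong[OF e] by simp
  have "Tm m (\<lambda>w. \<phi> (H w))" by (rule Suc.IH[OF sphi lphi tphi])
  then have "Tm m (deriv (\<lambda>w. q (H w)))" by (rule Tm_cong_ev[OF e])
  with l show ?case unfolding Tm_Suc by blast
qed

lemma sm_exp_comp: "sm D \<Longrightarrow> sm (\<lambda>x. exp (D x))"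
  by (rule sm_comp[of D UNIV]) (auto simp: smooth_exp)

lemma Tm_exp_neg:
  assumes "sm D" "filterlim D at_bot at_top" "(deriv D \<longlongrightarrow> d) at_top" "\<forall>n. Tm n (deriv D)"
  shows "Tm m (\<lambda>x. exp (D x))"
proof (induction m)
  case 0 then show ?case by simp
next
  case (Suc m)
  have lE: "((\<lambda>x. exp (D x)) \<longlongrightarrow> 0) at_top" by (rule filterlim_compose[OF exp_at_bot assms(2)])
  have e: "eventually (\<lambda>x. exp (D x) * deriv D x = deriv (\<lambda>x. exp (D x)) x) at_top"
    using ev_deriv_comp[OF assms(1) open_UNIV smooth_exp] by (simp add: deriv_exp_eq eq_commute)
  have "((\<lambda>x. exp (D x) * deriv D x) \<longlongrightarrow> 0 * d) at_top" by (rule tendsto_mult[OF lE assms(3)])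
  then have l: "(deriv (\<lambda>x. exp (D x)) \<longlongrightarrow> 0) at_top" using tendsto_cong[OF e] by simp
  have "Tm m (\<lambda>x. exp (D x) * deriv D x)"
    by (rule Tm_mult[OF sm_exp_comp[OF assms(1)] sm_deriv[OF assms(1)] lE assms(3) Suc]) (use assms(4) in blast)
  then have "Tm m (deriv (\<lambda>x. exp (D x)))" by (rule Tm_cong_ev[OF e])
  with l show ?case unfolding Tm_Suc by blast
qed

lemma sm_inverse: "sm (inverse :: real \<Rightarrow> real)"
  unfolding sm_def using smooth_inverse by blast

lemma lim_inverse_top: "((inverse :: real \<Rightarrow> real) \<longlongrightarrow> 0) at_top"
  using tendsto_inverse_0_at_top[OF filterlim_ident] by simp

lemma Tm_inverse_top: "Tm m (inverse :: real \<Rightarrow> real)"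
proof (induction m)
  case 0 then show ?case by simp
next
  case (Suc m)
  have e: "eventually (\<lambda>x. (-1) * (inverse x * inverse x) = deriv inverse (x::real)) at_top"
    using eventually_gt_at_top[of 0]
    by eventually_elim (rule DERIV_imp_deriv[symmetric], auto intro!: derivative_eq_intros simp: power2_eq_square)
  have "((\<lambda>x. (-1) * (inverse x * inverse (x::real))) \<longlongrightarrow> (-1) * (0 * 0)) at_top"
    by (rule tendsto_mult[OF tendsto_const tendsto_mult[OF lim_inverse_top lim_inverse_top]])
  then have l: "(deriv (inverse :: real \<Rightarrow> real) \<longlongrightarrow> 0) at_top" using tendsto_cong[OF e] by simp
  have "Tm m (\<lambda>x. (-1) * (inverse x * inverse (x::real)))"
    by (rule Tm_cmult[OF sm_mult[OF sm_inverse sm_inverse] _ Tm_mult[OF sm_inverse sm_inverse lim_inverse_top lim_inverse_top Suc Suc]])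
       (rule tendsto_mult[OF lim_inverse_top lim_inverse_top])
  then have "Tm m (deriv (inverse :: real \<Rightarrow> real))" by (rule Tm_cong_ev[OF e])
  with l show ?case unfolding Tm_Suc by blast
qed

lemma SR_unpack:
  assumes "SR a f"
  obtains zo where "zo \<ge> 1" "\<forall>x>zo. f x > 0" "smooth_on_set {zo<..} f"
    "smooth_on_set {ln zo<..} (\<lambda>u. ln (f (exp u)))"
    "(deriv (\<lambda>u. ln (f (exp u))) \<longlongrightarrow> a) at_top" "\<forall>n. Tm n (deriv (\<lambda>u. ln (f (exp u))))"
    "\<forall>u>ln zo. deriv f (exp u) = exp (ln (f (exp u)) - u) * deriv (\<lambda>u. ln (f (exp u))) u"
proof -
  define F where "F = (\<lambda>u. ln (f (exp u)))"
  obtain z zo where sf: "smooth_on_set {z<..} f" and zo: "zo \<ge> 1" "zo \<ge> z" and pos: "\<forall>x>zo. f x > 0"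
    and l1: "(deriv F \<longlongrightarrow> a) at_top" and l2: "\<forall>m::nat. m \<ge> 2 \<longrightarrow> ((deriv ^^ m) F \<longlongrightarrow> 0) at_top"
    using assms unfolding SR_def Let_def F_def by blast
  have sf': "smooth_on_set {zo<..} f" by (rule smooth_subset[OF sf]) (use zo in auto)
  have se: "smooth_on_set {ln zo<..} (\<lambda>u. f (exp u))"
  proof (rule smooth_comp[OF _ _ smooth_exp _ sf'])
    fix x assume "x \<in> {ln zo<..}"
    then have "ln zo < x" by simp
    then have "zo < exp x" using zo(1) by (metis exp_less_cancel_iff exp_ln less_le_trans zero_less_one)
    then show "exp x \<in> {zo<..}" by simp
  qed auto
  have ex: "\<And>u. u > ln zo \<Longrightarrow> exp u > zo"
    using zo(1) by (metis exp_less_cancel_iff exp_ln less_le_trans zero_less_one)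
  have sF: "smooth_on_set {ln zo<..} F" unfolding F_def
    by (rule smooth_comp[OF _ _ se _ smooth_ln]) (use ex pos in auto)
  have tm: "\<forall>n. Tm n (deriv F)"
  proof
    fix n show "Tm n (deriv F)" unfolding Tm_def
    proof (intro allI impI)
      fix j assume "1 \<le> j \<and> j \<le> n"
      then have "Suc j \<ge> 2" by simp
      then have "((deriv ^^ Suc j) F \<longlongrightarrow> 0) at_top" using l2 by blast
      then show "((deriv ^^ j) (deriv F) \<longlongrightarrow> 0) at_top" by (simp only: funpow_Suc_right o_def)
    qed
  qed
  have df: "\<forall>u>ln zo. deriv f (exp u) = exp (F u - u) * deriv F u"
  proof (intro allI impI)
    fix u assume u: "u > ln zo"
    have fd: "f differentiable (at (exp u))" by (rule smooth_diff[OF sf']) (use ex u in auto)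
    have fp: "f (exp u) > 0" using pos ex u by auto
    have "(F has_field_derivative inverse (f (exp u)) * (deriv f (exp u) * exp u)) (at u)"
      unfolding F_def
      by (rule DERIV_chain2[OF DERIV_ln DERIV_chain2[OF diff_DERIV[OF fd] DERIV_exp]]) (use fp in auto)
    then have d: "deriv F u = inverse (f (exp u)) * (deriv f (exp u) * exp u)" by (rule DERIV_imp_deriv)
    have e: "exp (F u - u) = f (exp u) / exp u" unfolding F_def using fp by (simp add: exp_diff)
    have "exp (F u - u) * deriv F u = (f (exp u) / exp u) * (inverse (f (exp u)) * (deriv f (exp u) * exp u))"
      by (simp only: e d)
    also have "\<dots> = deriv f (exp u)" using fp by (simp add: field_simps)
    finally show "deriv f (exp u) = exp (F u - u) * deriv F u" by simp
  qed
  show ?thesis by (rule that[OF zo(1) pos sf' sF[unfolded F_def] l1[unfolded F_def] tm[unfolded F_def] df[unfolded F_def]])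
qed

lemma mvt_lower:
  fixes D :: "real \<Rightarrow> real"
  assumes "\<forall>x\<ge>a. D differentiable (at x) \<and> deriv D x \<ge> c" "a \<le> x" "x \<le> y"
  shows "D y - D x \<ge> c * (y - x)"
proof (cases "x = y")
  case True then show ?thesis by simp
next
  case False
  then have xy: "x < y" using assms(3) by simp
  have cont: "continuous_on {x..y} D"
  proof (rule continuous_at_imp_continuous_on, rule ballI)
    fix z assume "z \<in> {x..y}"
    then have "D differentiable (at z)" using assms by auto
    then show "isCont D z" by (rule differentiable_imp_continuous_within)
  qed
  obtain l z where z: "x < z" "z < y" "DERIV D z :> l" "D y - D x = (y - x) * l"
    using MVT[OF xy cont] assms by (meson less_imp_le order.trans)
  have dz: "D differentiable (at z)" "deriv D z \<ge> c" using assms z by auto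
  have "l = deriv D z" using DERIV_unique[OF z(3) diff_DERIV[OF dz(1)]] .
  then have "l \<ge> c" using dz by simp
  then show ?thesis using z(4) xy by (simp add: mult_right_mono mult.commute)
qed

lemma ev_forall_ge: "eventually P (at_top :: real filter) \<Longrightarrow> \<exists>a. \<forall>x\<ge>a. P x"
  unfolding eventually_at_top_linorder by blast

lemma lin_growth:
  fixes D :: "real \<Rightarrow> real"
  assumes "sm D" "(deriv D \<longlongrightarrow> d) at_top" "d > 0"
  shows "filterlim D at_top at_top"
proof -
  have "eventually (\<lambda>x. deriv D x > d/2) at_top"
    using order_tendstoD(1)[OF assms(2), of "d/2"] assms(3) by simp
  then have "eventually (\<lambda>x. D differentiable (at x) \<and> deriv D x \<ge> d/2) at_top"
    using sm_ev_diff[OF assms(1)] by eventually_elim auto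
  then obtain a where a: "\<forall>x\<ge>a. D differentiable (at x) \<and> deriv D x \<ge> d/2" using ev_forall_ge by blast
  show ?thesis unfolding filterlim_at_top
  proof
    fix Z
    show "eventually (\<lambda>x. Z \<le> D x) at_top"
      using eventually_ge_at_top[of "max a (a + 2 * (Z - D a) / d)"]
    proof eventually_elim
      case (elim x)
      have "D x - D a \<ge> d/2 * (x - a)" by (rule mvt_lower[OF a]) (use elim in auto)
      moreover have "d/2 * (x - a) \<ge> d/2 * (2 * (Z - D a) / d)" using elim assms(3) by (intro mult_left_mono) auto
      moreover have "d/2 * (2 * (Z - D a) / d) = Z - D a" using assms(3) by simp
      ultimately show ?case by linarith
    qed
  qed
qed

lemma sm_ln_comp: "sm W \<Longrightarrow> eventually (\<lambda>x. W x > 0) at_top \<Longrightarrow> sm (\<lambda>x. ln (W x))"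
  by (rule sm_comp[OF _ _ smooth_ln]) auto

lemma sm_inverse_comp: "sm W \<Longrightarrow> eventually (\<lambda>x. W x > 0) at_top \<Longrightarrow> sm (\<lambda>x. inverse (W x))"
  by (rule sm_comp[OF _ _ smooth_inverse]) auto

lemma smooth_id: "smooth_on_set S (\<lambda>x::real. x)"
  unfolding smooth_Dm
proof
  fix m show "Dm m S (\<lambda>x::real. x)"
  proof (cases m)
    case 0 then show ?thesis by simp
  next
    case (Suc n)
    have "Dm n S (\<lambda>x. 1)" by (rule Dm_const)
    then show ?thesis unfolding Suc Dm_Suc by simp
  qed
qed

lemma sm_id: "sm (\<lambda>x::real. x)" unfolding sm_def using smooth_id by blast

lemma Dm_invfun:
  assumes "open S" "open U" "\<forall>w\<in>S. H w \<in> U" "\<forall>w\<in>S. (H has_field_derivative inverse (deriv Psi (H w))) (at w)"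
    "smooth_on_set U Psi" "\<forall>s\<in>U. deriv Psi s > 0"
  shows "smooth_on_set U Fn \<Longrightarrow> Dm m S (\<lambda>w. Fn (H w))"
proof (induction m arbitrary: Fn)
  case 0
  show ?case unfolding Dm_0
  proof
    fix x assume x: "x \<in> S"
    show "(\<lambda>x. Fn (H x)) differentiable (at x)"
      by (rule diff_comp) (use 0 x assms(3,4) smooth_diff DERIVdf in auto)
  qed
next
  case (Suc m)
  define \<phi> where "\<phi> = (\<lambda>s. deriv Fn s * inverse (deriv Psi s))"
  have sphi: "smooth_on_set U \<phi>" unfolding \<phi>_def
    by (rule smooth_mult[OF assms(2) smooth_deriv[OF Suc.prems] smooth_comp[OF assms(2) _ smooth_deriv[OF assms(5)] _ smooth_inverse]])
       (use assms(6) in auto)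
  have e: "\<And>y. y \<in> S \<Longrightarrow> \<phi> (H y) = deriv (\<lambda>w. Fn (H w)) y"
  proof -
    fix y assume y: "y \<in> S"
    have "((\<lambda>w. Fn (H w)) has_field_derivative deriv Fn (H y) * inverse (deriv Psi (H y))) (at y)"
      by (rule DERIV_chain2[OF diff_DERIV]) (use y assms(3,4) smooth_diff Suc.prems in auto)
    then show "\<phi> (H y) = deriv (\<lambda>w. Fn (H w)) y" unfolding \<phi>_def by (rule DERIV_imp_deriv[symmetric])
  qed
  have h: "Dm m S (\<lambda>w. \<phi> (H w))" by (rule Suc.IH[OF sphi])
  have "Dm m S (deriv (\<lambda>w. Fn (H w)))" by (rule Dm_cong[OF assms(1) e h])
  moreover have "\<forall>x\<in>S. (\<lambda>x. Fn (H x)) differentiable (at x)"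
  proof
    fix x assume x: "x \<in> S"
    show "(\<lambda>x. Fn (H x)) differentiable (at x)"
      by (rule diff_comp) (use Suc.prems x assms(3,4) smooth_diff DERIVdf in auto)
  qed
  ultimately show ?case unfolding Dm_Suc by blast
qed

lemma sm_diff: "sm u \<Longrightarrow> sm v \<Longrightarrow> sm (\<lambda>x. u x - v x)"
  using sm_add[OF _ sm_mult[OF sm_const], of u v "-1"] by simp

lemma ev_deriv_diff: assumes "sm u" "sm v"
  shows "eventually (\<lambda>x. deriv (\<lambda>x. u x - v x) x = deriv u x - deriv v x) at_top"
  using sm_ev_diff[OF assms(1)] sm_ev_diff[OF assms(2)]
  by eventually_elim (rule DERIV_imp_deriv, intro DERIV_diff diff_DERIV, auto)

locale core =
  fixes F K :: "real \<Rightarrow> real" and \<alpha> b T0 :: real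
  assumes a1: "\<alpha> > 1" and ab: "b < \<alpha>" and sF: "sm F" and sK: "sm K"
    and lF: "(deriv F \<longlongrightarrow> \<alpha>) at_top" and lK: "(deriv K \<longlongrightarrow> b) at_top"
    and tF: "\<forall>n. Tm n (deriv F)" and tK: "\<forall>n. Tm n (deriv K)"
begin

definition E where "E s = exp (K s - F s)"
definition W where "W s = deriv F s - 1 + E s"
definition Q where "Q s = exp (F s) * (deriv F s - 1) + exp (K s)"
definition Psi where "Psi s = ln (Q s)"
definition A where "A s = deriv F s * (deriv F s - 1) + deriv (deriv F) s"
definition P where "P s = exp (F s - s) * deriv F s"
definition B where "B s = A s / (A s + E s * deriv K s)"
definition R where "R s = inverse (deriv Psi s)"

lemma F2: "(deriv (deriv F) \<longlongrightarrow> 0) at_top"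
  using tF[THEN spec, of "Suc 0"] unfolding Tm_Suc by blast

lemma sF': "sm (deriv F)" using sm_deriv[OF sF] .
lemma sK': "sm (deriv K)" using sm_deriv[OF sK] .

lemma E_facts: "sm E" "(E \<longlongrightarrow> 0) at_top" "\<forall>n. Tm n E"
proof -
  define D where "D = (\<lambda>s. K s - F s)"
  have sD: "sm D" unfolding D_def by (rule sm_diff[OF sK sF])
  have eD: "eventually (\<lambda>x. deriv K x - deriv F x = deriv D x) at_top"
    using ev_deriv_diff[OF sK sF] unfolding D_def by (simp add: eq_commute)
  have "((\<lambda>x. deriv K x - deriv F x) \<longlongrightarrow> b - \<alpha>) at_top" by (rule tendsto_diff[OF lK lF])
  then have lD: "(deriv D \<longlongrightarrow> b - \<alpha>) at_top" using tendsto_cong[OF eD] by simp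
  have tD: "\<forall>n. Tm n (deriv D)"
  proof
    fix n
    have "Tm n (\<lambda>x. deriv K x - deriv F x)"
      by (rule Tm_diff[OF sK' sF' _ _ lF]) (use tK tF in blast)+
    then show "Tm n (deriv D)" by (rule Tm_cong_ev[OF eD])
  qed
  have "filterlim (\<lambda>x. - D x) at_top at_top"
  proof (rule lin_growth)
    show "sm (\<lambda>x. - D x)" using sm_mult[OF sm_const sD, of "-1"] by simp
    have "eventually (\<lambda>x. deriv (\<lambda>x. (-1) * D x) x = deriv (\<lambda>x. -1) x * D x + (-1) * deriv D x) at_top"
      by (rule ev_deriv_mult[OF sm_const sD])
    then have e: "eventually (\<lambda>x. - deriv D x = deriv (\<lambda>x. - D x) x) at_top"
      by eventually_elim simp
    have "((\<lambda>x. - deriv D x) \<longlongrightarrow> - (b - \<alpha>)) at_top" by (rule tendsto_minus[OF lD])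
    then show "(deriv (\<lambda>x. - D x) \<longlongrightarrow> \<alpha> - b) at_top" using tendsto_cong[OF e] by simp
    show "\<alpha> - b > 0" using ab by simp
  qed
  then have fD: "filterlim D at_bot at_top" unfolding filterlim_uminus_at_bot .
  show "sm E" unfolding E_def using sm_exp_comp[OF sD] unfolding D_def .
  show "(E \<longlongrightarrow> 0) at_top" unfolding E_def using filterlim_compose[OF exp_at_bot fD] unfolding D_def .
  show "\<forall>n. Tm n E" unfolding E_def using Tm_exp_neg[OF sD fD lD tD] unfolding D_def by blast
qed

lemma W_facts: "sm W" "(W \<longlongrightarrow> \<alpha> - 1) at_top" "\<forall>n. Tm n W" "eventually (\<lambda>x. W x > 0) at_top"
proof -
  have s1: "sm (\<lambda>s. deriv F s - 1)" by (rule sm_diff[OF sF' sm_const])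
  show sW: "sm W" unfolding W_def by (rule sm_add[OF s1 E_facts(1)])
  have "((\<lambda>s. deriv F s - 1 + E s) \<longlongrightarrow> \<alpha> - 1 + 0) at_top"
    by (intro tendsto_add tendsto_diff lF tendsto_const E_facts(2))
  then show lW: "(W \<longlongrightarrow> \<alpha> - 1) at_top" unfolding W_def by simp
  show "\<forall>n. Tm n W"
  proof
    fix n
    have "Tm n (\<lambda>s. deriv F s - 1)" by (rule Tm_diff[OF sF' sm_const _ Tm_const tendsto_const]) (use tF in blast)
    then show "Tm n W" unfolding W_def by (rule Tm_add[OF s1 E_facts(1)]) (use E_facts(3) in blast)
  qed
  show "eventually (\<lambda>x. W x > 0) at_top" using order_tendstoD(1)[OF lW, of 0] a1 by simp
qed

lemma lnW_facts: "sm (\<lambda>s. ln (W s))" "\<forall>n. Tm n (\<lambda>s. ln (W s))"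
proof -
  show "sm (\<lambda>s. ln (W s))" by (rule sm_ln_comp[OF W_facts(1) W_facts(4)])
  show "\<forall>n. Tm n (\<lambda>s. ln (W s))"
  proof
    fix n show "Tm n (\<lambda>s. ln (W s))"
      by (rule Tm_comp_smooth[OF W_facts(1) W_facts(2) _ _ smooth_ln]) (use a1 W_facts(3) in auto)
  qed
qed

lemma Q_eq: "Q s = exp (F s) * W s"
  unfolding Q_def W_def E_def by (simp add: algebra_simps exp_diff)

lemma Q_pos_ev: "eventually (\<lambda>s. Q s > 0) at_top"
  using W_facts(4) by eventually_elim (simp add: Q_eq)

lemma Psi_ev: "eventually (\<lambda>s. F s + ln (W s) = Psi s) at_top"
  using W_facts(4) by eventually_elim (simp add: Psi_def Q_eq ln_mult)

lemma Psi_facts: "sm Psi" "(deriv Psi \<longlongrightarrow> \<alpha>) at_top" "\<forall>n. Tm n (deriv Psi)" "filterlim Psi at_top at_top"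
proof -
  have s1: "sm (\<lambda>s. F s + ln (W s))" by (rule sm_add[OF sF lnW_facts(1)])
  show sP: "sm Psi" by (rule sm_cong_ev[OF s1 Psi_ev])
  have e1: "eventually (\<lambda>x. deriv (\<lambda>s. F s + ln (W s)) x = deriv Psi x) at_top" by (rule ev_deriv[OF Psi_ev])
  have e: "eventually (\<lambda>x. deriv F x + deriv (\<lambda>s. ln (W s)) x = deriv Psi x) at_top"
    using e1 ev_deriv_add[OF sF lnW_facts(1)] by eventually_elim simp
  have t1: "Tm (Suc 0) (\<lambda>s. ln (W s))" using lnW_facts(2) by blast
  have l0: "(deriv (\<lambda>s. ln (W s)) \<longlongrightarrow> 0) at_top" using t1 unfolding Tm_Suc by blast
  have "((\<lambda>x. deriv F x + deriv (\<lambda>s. ln (W s)) x) \<longlongrightarrow> \<alpha> + 0) at_top" by (rule tendsto_add[OF lF l0])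
  then show lP: "(deriv Psi \<longlongrightarrow> \<alpha>) at_top" using tendsto_cong[OF e] by simp
  show "\<forall>n. Tm n (deriv Psi)"
  proof
    fix n
    have "Tm (Suc n) (\<lambda>s. ln (W s))" using lnW_facts(2) by blast
    then have t2: "Tm n (deriv (\<lambda>s. ln (W s)))" unfolding Tm_Suc by blast
    have "Tm n (\<lambda>x. deriv F x + deriv (\<lambda>s. ln (W s)) x)"
      by (rule Tm_add[OF sF' sm_deriv[OF lnW_facts(1)] _ t2]) (use tF in blast)
    then show "Tm n (deriv Psi)" by (rule Tm_cong_ev[OF e])
  qed
  show "filterlim Psi at_top at_top" by (rule lin_growth[OF sP lP]) (use a1 in simp)
qed

lemma R_facts: "sm R" "(R \<longlongrightarrow> inverse \<alpha>) at_top" "\<forall>n. Tm n R"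
proof -
  have pos: "eventually (\<lambda>x. deriv Psi x > 0) at_top" using order_tendstoD(1)[OF Psi_facts(2), of 0] a1 by simp
  show "sm R" unfolding R_def by (rule sm_inverse_comp[OF sm_deriv[OF Psi_facts(1)] pos])
  show "(R \<longlongrightarrow> inverse \<alpha>) at_top" unfolding R_def by (rule tendsto_inverse[OF Psi_facts(2)]) (use a1 in simp)
  show "\<forall>n. Tm n R"
  proof
    fix n show "Tm n R" unfolding R_def
      by (rule Tm_comp_smooth[OF sm_deriv[OF Psi_facts(1)] Psi_facts(2) _ _ smooth_inverse])
         (use a1 Psi_facts(3) in auto)
  qed
qed

lemma A_lim: "(A \<longlongrightarrow> \<alpha> * (\<alpha> - 1)) at_top"
proof -
  have "((\<lambda>s. deriv F s * (deriv F s - 1) + deriv (deriv F) s) \<longlongrightarrow> \<alpha> * (\<alpha> - 1) + 0) at_top"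
    by (intro tendsto_add tendsto_mult tendsto_diff lF tendsto_const F2)
  then show ?thesis unfolding A_def by simp
qed

lemma B_lim: "(B \<longlongrightarrow> 1) at_top"
proof -
  have "((\<lambda>s. A s / (A s + E s * deriv K s)) \<longlongrightarrow> (\<alpha> * (\<alpha> - 1)) / (\<alpha> * (\<alpha> - 1) + 0 * b)) at_top"
    by (intro tendsto_divide tendsto_add tendsto_mult A_lim E_facts(2) lK) (use a1 in simp)
  then show ?thesis unfolding B_def using a1 by simp
qed

lemma AEK_pos_ev: "eventually (\<lambda>s. A s + E s * deriv K s > 0) at_top"
proof -
  have "((\<lambda>s. A s + E s * deriv K s) \<longlongrightarrow> \<alpha> * (\<alpha> - 1) + 0 * b) at_top"
    by (intro tendsto_add tendsto_mult A_lim E_facts(2) lK)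
  then show ?thesis using order_tendstoD(1)[of _ "\<alpha> * (\<alpha> - 1)" _ 0] a1 by simp
qed

end

context core begin

lemma ex_s0: "\<exists>s. s \<ge> T0 + 1 \<and> smooth_on_set {s - 1<..} Psi \<and> smooth_on_set {s - 1<..} F \<and> smooth_on_set {s - 1<..} K \<and>
   (\<forall>x > s - 1. deriv Psi x \<ge> \<alpha>/2 \<and> Q x > 0 \<and> A x + E x * deriv K x > 0)"
proof -
  obtain c1 where c1: "\<And>c. c \<ge> c1 \<Longrightarrow> smooth_on_set {c<..} Psi" using sm_tail[OF Psi_facts(1)] by blast
  obtain c2 where c2: "\<And>c. c \<ge> c2 \<Longrightarrow> smooth_on_set {c<..} F" using sm_tail[OF sF] by blast
  obtain c3 where c3: "\<And>c. c \<ge> c3 \<Longrightarrow> smooth_on_set {c<..} K" using sm_tail[OF sK] by blast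
  have "eventually (\<lambda>x. deriv Psi x > \<alpha>/2) at_top" using order_tendstoD(1)[OF Psi_facts(2), of "\<alpha>/2"] a1 by simp
  then have "eventually (\<lambda>x. deriv Psi x \<ge> \<alpha>/2 \<and> Q x > 0 \<and> A x + E x * deriv K x > 0) at_top"
    using Q_pos_ev AEK_pos_ev by eventually_elim auto
  then obtain c4 where c4: "\<forall>x\<ge>c4. deriv Psi x \<ge> \<alpha>/2 \<and> Q x > 0 \<and> A x + E x * deriv K x > 0"
    using ev_forall_ge by blast
  define s where "s = max (T0 + 1) (max (c1 + 1) (max (c2 + 1) (max (c3 + 1) (c4 + 1))))"
  have "s \<ge> T0 + 1" unfolding s_def by simp
  moreover have "smooth_on_set {s - 1<..} Psi" by (rule c1) (simp add: s_def)
  moreover have "smooth_on_set {s - 1<..} F" by (rule c2) (simp add: s_def)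
  moreover have "smooth_on_set {s - 1<..} K" by (rule c3) (simp add: s_def)
  moreover have "\<forall>x > s - 1. deriv Psi x \<ge> \<alpha>/2 \<and> Q x > 0 \<and> A x + E x * deriv K x > 0"
    using c4 unfolding s_def by auto
  ultimately show ?thesis by blast
qed

definition s0 where "s0 = (SOME s. s \<ge> T0 + 1 \<and> smooth_on_set {s - 1<..} Psi \<and> smooth_on_set {s - 1<..} F \<and> smooth_on_set {s - 1<..} K \<and>
   (\<forall>x > s - 1. deriv Psi x \<ge> \<alpha>/2 \<and> Q x > 0 \<and> A x + E x * deriv K x > 0))"

lemma s0: "s0 \<ge> T0 + 1" "smooth_on_set {s0 - 1<..} Psi" "smooth_on_set {s0 - 1<..} F" "smooth_on_set {s0 - 1<..} K"
   "\<forall>x > s0 - 1. deriv Psi x \<ge> \<alpha>/2 \<and> Q x > 0 \<and> A x + E x * deriv K x > 0"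
  using someI_ex[OF ex_s0] unfolding s0_def[symmetric] by blast+

lemma Psi_diff: "x > s0 - 1 \<Longrightarrow> Psi differentiable (at x)"
  using smooth_diff[OF s0(2)] by simp

lemma Psi_cont: "x > s0 - 1 \<Longrightarrow> isCont Psi x"
  using Psi_diff differentiable_imp_continuous_within by blast

lemma Psi_lower: "s0 \<le> x \<Longrightarrow> x \<le> y \<Longrightarrow> Psi y - Psi x \<ge> \<alpha>/2 * (y - x)"
  by (rule mvt_lower[of s0]) (use Psi_diff s0(5) in auto)

lemma Psi_mono: "s0 \<le> x \<Longrightarrow> x < y \<Longrightarrow> Psi x < Psi y"
proof -
  assume "s0 \<le> x" "x < y"
  then have "Psi y - Psi x \<ge> \<alpha>/2 * (y - x)" using Psi_lower by simp
  moreover have "\<alpha>/2 * (y - x) > 0" using a1 \<open>x < y\<close> by simp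
  ultimately show "Psi x < Psi y" by simp
qed

lemma Psi_inj: "s0 \<le> x \<Longrightarrow> s0 \<le> y \<Longrightarrow> Psi x = Psi y \<Longrightarrow> x = y"
  using Psi_mono by (metis less_irrefl linorder_neqE_linordered_idom)

definition w0 where "w0 = Psi s0"
definition H where "H w = (THE s. s > s0 \<and> Psi s = w)"

lemma H_ex: assumes "w > w0" shows "\<exists>s>s0. Psi s = w"
proof -
  define S where "S = s0 + 2 * (w - w0) / \<alpha> + 1"
  have S: "S \<ge> s0" unfolding S_def using assms a1 by simp
  have "Psi S - Psi s0 \<ge> \<alpha>/2 * (S - s0)" by (rule Psi_lower) (use S in auto)
  moreover have "\<alpha>/2 * (S - s0) = (w - w0) + \<alpha>/2" unfolding S_def using a1 by (simp add: field_simps)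
  ultimately have "Psi S \<ge> w" using a1 unfolding w0_def by simp
  moreover have "Psi s0 \<le> w" using assms unfolding w0_def by simp
  moreover have "continuous_on {s0..S} Psi"
    by (rule continuous_at_imp_continuous_on) (use Psi_cont in auto)
  ultimately obtain x where x: "s0 \<le> x" "x \<le> S" "Psi x = w" using IVT'[of Psi s0 w S] S by blast
  have "x \<noteq> s0" using x(3) assms unfolding w0_def by auto
  then have "x > s0" using x(1) by simp
  then show ?thesis using x(3) by blast
qed

lemma H_prop: assumes "w > w0" shows "H w > s0" "Psi (H w) = w"
proof -
  have "\<exists>!s. s > s0 \<and> Psi s = w" using H_ex[OF assms] Psi_inj by (metis less_imp_le)
  then have "H w > s0 \<and> Psi (H w) = w" unfolding H_def by (rule theI')
  then show "H w > s0" "Psi (H w) = w" by auto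
qed

lemma H_eq: assumes "s > s0" "Psi s = w" shows "H w = s"
  unfolding H_def
proof (rule the_equality)
  show "s0 < s \<and> Psi s = w" using assms by simp
  fix t assume "s0 < t \<and> Psi t = w"
  then show "t = s" using Psi_inj assms by (metis less_imp_le)
qed

lemma w0_less: "s > s0 \<Longrightarrow> Psi s > w0"
  unfolding w0_def using Psi_mono by simp

lemma H_DERIV: assumes "w > w0" shows "(H has_field_derivative inverse (deriv Psi (H w))) (at w)"
proof (rule DERIV_inverse_function[where f=Psi and g=H and x=w and a=w0 and b="w + 1"])
  have hw: "H w > s0" "Psi (H w) = w" using H_prop[OF assms] by auto
  show "(Psi has_field_derivative deriv Psi (H w)) (at (H w))" by (rule diff_DERIV[OF Psi_diff]) (use hw in simp)
  show "deriv Psi (H w) \<noteq> 0" using s0(5) hw a1 by (metis diff_gt_0_iff_gt diff_less_eq divide_pos_pos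
        less_add_one not_less order.trans zero_less_numeral less_imp_le less_trans linorder_not_le)
  show "w0 < w" "w < w + 1" using assms by auto
  show "\<And>y. w0 < y \<Longrightarrow> y < w + 1 \<Longrightarrow> Psi (H y) = y" using H_prop by auto
  define d where "d = (H w - s0) / 2"
  have d: "d > 0" unfolding d_def using hw by simp
  have "isCont H (Psi (H w))"
  proof (rule isCont_inverse_function[where f=Psi and g=H and x="H w", OF d])
    fix z assume "\<bar>z - H w\<bar> \<le> d"
    then have "H w - z \<le> d" by (simp add: abs_le_iff)
    then have "2 * (H w - z) \<le> H w - s0" unfolding d_def by simp
    then have z: "z > s0" using hw(1) by (simp add: algebra_simps)
    show "H (Psi z) = z" by (rule H_eq[OF z refl])
    show "isCont Psi z" by (rule Psi_cont) (use z in simp)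
  qed
  then show "isCont H w" using hw by simp
qed

lemma dPsi_pos: "x > s0 - 1 \<Longrightarrow> deriv Psi x > 0"
proof -
  assume "x > s0 - 1"
  then have "deriv Psi x \<ge> \<alpha>/2" using s0(5) by blast
  then show ?thesis using a1 by simp
qed

lemma H_smooth: "smooth_on_set {w0<..} H"
  unfolding smooth_Dm
proof
  fix m
  have "Dm m {w0<..} (\<lambda>w. (\<lambda>x. x) (H w))"
  proof (rule Dm_invfun[of "{w0<..}" "{s0 - 1<..}" H Psi])
    show "\<forall>w\<in>{w0<..}. H w \<in> {s0 - 1<..}" using H_prop by fastforce
    show "\<forall>w\<in>{w0<..}. (H has_field_derivative inverse (deriv Psi (H w))) (at w)" using H_DERIV by auto
    show "\<forall>s\<in>{s0 - 1<..}. 0 < deriv Psi s" using dPsi_pos by auto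
  qed (auto simp: s0(2) smooth_id)
  then show "Dm m {w0<..} H" by simp
qed

lemma sm_H: "sm H" unfolding sm_def using H_smooth by blast

lemma H_top: "filterlim H at_top at_top"
  unfolding filterlim_at_top
proof
  fix Z
  define S where "S = max Z (s0 + 1)"
  have S: "S > s0" unfolding S_def by simp
  show "eventually (\<lambda>w. Z \<le> H w) at_top"
    using eventually_ge_at_top[of "Psi S"]
  proof eventually_elim
    case (elim w)
    have ww: "w > w0" using w0_less[OF S] elim by simp
    have "\<not> H w < S"
    proof
      assume "H w < S"
      moreover have "s0 \<le> H w" using H_prop(1)[OF ww] by simp
      ultimately have "Psi (H w) < Psi S" using Psi_mono by blast
      then show False using H_prop[OF ww] elim by simp
    qed
    then show ?case unfolding S_def by simp
  qed
qed

lemma dH_ev: "eventually (\<lambda>w. deriv H w = R (H w)) at_top"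
  using eventually_gt_at_top[of w0]
  by eventually_elim (simp add: R_def DERIV_imp_deriv[OF H_DERIV])

lemma H_facts: "(deriv H \<longlongrightarrow> inverse \<alpha>) at_top" "\<forall>n. Tm n (deriv H)"
proof -
  have e: "eventually (\<lambda>w. R (H w) = deriv H w) at_top" using dH_ev by (simp add: eq_commute)
  have "((\<lambda>w. R (H w)) \<longlongrightarrow> inverse \<alpha>) at_top" by (rule filterlim_compose[OF R_facts(2) H_top])
  then show "(deriv H \<longlongrightarrow> inverse \<alpha>) at_top" using tendsto_cong[OF e] by simp
  show "\<forall>n. Tm n (deriv H)"
  proof
    fix n
    have "Tm n (\<lambda>w. R (H w))" by (rule Tm_inv_fun[OF H_top sm_H R_facts(1,2,3) dH_ev R_facts(1,2,3)])
    then show "Tm n (deriv H)" by (rule Tm_cong_ev[OF e])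
  qed
qed

end

context core begin

definition gsol where "gsol \<Lambda> = exp (H (ln (ln \<Lambda>)))"
definition ro where "ro = exp (exp w0)"

lemma ro_pos: "ro > 0" unfolding ro_def by simp

lemma lam: assumes "\<Lambda> > ro" shows "ln \<Lambda> > exp w0" "ln (ln \<Lambda>) > w0" "ln \<Lambda> > 0" "\<Lambda> > 0"
proof -
  show l0: "\<Lambda> > 0" using assms ro_pos by simp
  have "ln \<Lambda> > ln ro" using assms ro_pos by simp
  then show l1: "ln \<Lambda> > exp w0" unfolding ro_def by simp
  then show l2: "ln \<Lambda> > 0" using exp_gt_zero[of w0] by linarith
  have "ln (exp w0) < ln (ln \<Lambda>)" by (subst ln_less_cancel_iff) (use l1 l2 in auto)
  then show "ln (ln \<Lambda>) > w0" by simp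
qed

lemma Q_Psi: "s > s0 - 1 \<Longrightarrow> Q s = exp (Psi s)"
  unfolding Psi_def using s0(5) by simp

lemma Q_H: "w > w0 \<Longrightarrow> Q (H w) = exp w"
proof -
  assume w: "w > w0"
  have "H w > s0 - 1" using H_prop(1)[OF w] by simp
  then show ?thesis using Q_Psi H_prop(2)[OF w] by simp
qed

lemma sol: assumes "\<Lambda> > ro" shows "ln (gsol \<Lambda>) > s0" "Q (ln (gsol \<Lambda>)) = ln \<Lambda>"
proof -
  have w: "ln (ln \<Lambda>) > w0" using lam[OF assms] by simp
  show "ln (gsol \<Lambda>) > s0" unfolding gsol_def using H_prop(1)[OF w] by simp
  show "Q (ln (gsol \<Lambda>)) = ln \<Lambda>" unfolding gsol_def using Q_H[OF w] lam[OF assms] by simp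
qed

lemma uniq: assumes "\<Lambda> > ro" "s > s0" "Q s = ln \<Lambda>" shows "s = H (ln (ln \<Lambda>))"
proof -
  have "Psi s = ln (ln \<Lambda>)" unfolding Psi_def using assms(3) by simp
  then show ?thesis using H_eq[OF assms(2)] by simp
qed

lemma s_top: "filterlim (\<lambda>\<Lambda>. H (ln (ln \<Lambda>))) at_top at_top"
  by (rule filterlim_compose[OF H_top filterlim_compose[OF ln_at_top ln_at_top]])

lemma lim_s: "(\<phi> \<longlongrightarrow> l) at_top \<Longrightarrow> ((\<lambda>\<Lambda>. \<phi> (H (ln (ln \<Lambda>)))) \<longlongrightarrow> l) at_top"
  by (rule filterlim_compose[OF _ s_top])

lemma W_pos: "s > s0 - 1 \<Longrightarrow> W s > 0"
proof -
  assume "s > s0 - 1"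
  then have "Q s > 0" using s0(5) by blast
  then show ?thesis unfolding Q_eq by (simp add: zero_less_mult_iff)
qed

lemma sm_ln: "sm (ln :: real \<Rightarrow> real)" unfolding sm_def using smooth_ln by blast

lemma ev_dln: "eventually (\<lambda>u. inverse u = deriv ln (u::real)) at_top"
  using eventually_gt_at_top[of 0]
  by eventually_elim (rule DERIV_imp_deriv[symmetric], auto intro!: derivative_eq_intros simp: field_simps)

lemma Tm_Hln: "Tm m (\<lambda>u. H (ln u))"
proof (cases m)
  case 0 then show ?thesis by simp
next
  case (Suc n)
  have dln: "(deriv ln \<longlongrightarrow> (0::real)) at_top" using tendsto_cong[OF ev_dln] lim_inverse_top by simp
  have tln: "\<forall>n. Tm n (deriv (ln :: real \<Rightarrow> real))" using Tm_cong_ev[OF ev_dln Tm_inverse_top] by blast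
  have e: "eventually (\<lambda>u. deriv H (ln u) * inverse u = deriv (\<lambda>u. H (ln u)) u) at_top"
    using ev_deriv_comp_top[OF sm_H ln_at_top sm_ln] ev_dln by eventually_elim simp
  have l1: "((\<lambda>u. deriv H (ln u)) \<longlongrightarrow> inverse \<alpha>) at_top" by (rule filterlim_compose[OF H_facts(1) ln_at_top])
  have "((\<lambda>u. deriv H (ln u) * inverse u) \<longlongrightarrow> inverse \<alpha> * 0) at_top" by (rule tendsto_mult[OF l1 lim_inverse_top])
  then have l: "(deriv (\<lambda>u. H (ln u)) \<longlongrightarrow> 0) at_top" using tendsto_cong[OF e] by simp
  have "Tm n (\<lambda>u. deriv H (ln u))"
    by (rule Tm_comp_top[OF ln_at_top sm_ln dln tln sm_deriv[OF sm_H]]) (use H_facts(2) in blast)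
  then have "Tm n (\<lambda>u. deriv H (ln u) * inverse u)"
    by (rule Tm_mult[OF sm_comp_top[OF sm_deriv[OF sm_H] ln_at_top sm_ln] sm_inverse l1 lim_inverse_top _ Tm_inverse_top])
  then have "Tm n (deriv (\<lambda>u. H (ln u)))" by (rule Tm_cong_ev[OF e])
  with l show ?thesis unfolding Suc Tm_Suc by blast
qed

lemma hd_lim_of_Tm: "(\<forall>m. Tm m h) \<Longrightarrow> m \<ge> 1 \<Longrightarrow> ((deriv ^^ m) h \<longlongrightarrow> 0) at_top"
  unfolding Tm_def by blast

lemma smooth_gsol: "smooth_on_set {ro<..} gsol"
proof -
  have sl: "smooth_on_set {ro<..} ln" by (rule smooth_subset[OF smooth_ln]) (use ro_pos in auto)
  have sll: "smooth_on_set {ro<..} (\<lambda>x. ln (ln x))"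
  proof (rule smooth_comp[OF _ _ sl _ smooth_ln])
    fix x assume "x \<in> {ro<..}" then show "ln x \<in> {0<..}" using lam(3)[of x] by simp
  qed auto
  have sh: "smooth_on_set {ro<..} (\<lambda>x. H (ln (ln x)))"
  proof (rule smooth_comp[OF _ _ sll _ H_smooth])
    fix x assume "x \<in> {ro<..}" then show "ln (ln x) \<in> {w0<..}" using lam(2)[of x] by simp
  qed auto
  show ?thesis unfolding gsol_def by (rule smooth_comp[OF _ _ sh _ smooth_exp[of UNIV]]) auto
qed

lemma SR0: "SR 0 gsol"
proof -
  have h: "(\<lambda>u. ln (gsol (exp u))) = (\<lambda>u. H (ln u))" unfolding gsol_def by simp
  have "(deriv (\<lambda>u. H (ln u)) \<longlongrightarrow> 0) at_top" using Tm_Hln[of "Suc 0"] unfolding Tm_Suc by blast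
  moreover have "\<forall>m::nat. m \<ge> 2 \<longrightarrow> ((deriv ^^ m) (\<lambda>u. H (ln u)) \<longlongrightarrow> 0) at_top"
    using hd_lim_of_Tm[of "\<lambda>u. H (ln u)"] Tm_Hln by auto
  moreover have "\<forall>x>max 1 ro. gsol x > 0" unfolding gsol_def by simp
  ultimately show ?thesis unfolding SR_def Let_def h using smooth_gsol
    by (intro exI[of _ ro] exI[of _ "max 1 ro"]) auto
qed

lemma SR1: "SR (1 / \<alpha>) (\<lambda>u. gsol (exp u))"
proof -
  have h: "(\<lambda>v. ln (gsol (exp (exp v)))) = H" unfolding gsol_def by simp
  have ge: "(\<lambda>u. gsol (exp u)) = (\<lambda>u. exp (H (ln u)))" unfolding gsol_def by simp
  have sl: "smooth_on_set {exp w0<..} ln" by (rule smooth_subset[OF smooth_ln]) (auto intro: less_trans[OF exp_gt_zero])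
  have sh: "smooth_on_set {exp w0<..} (\<lambda>x. H (ln x))"
  proof (rule smooth_comp[OF _ _ sl _ H_smooth])
    fix x assume "x \<in> {exp w0<..}"
    then have x: "exp w0 < x" by simp
    have "ln (exp w0) < ln x" by (subst ln_less_cancel_iff) (use x in \<open>auto intro: less_trans[OF exp_gt_zero]\<close>)
    then show "ln x \<in> {w0<..}" by simp
  qed auto
  have sg: "smooth_on_set {exp w0<..} (\<lambda>u. gsol (exp u))" unfolding ge
    by (rule smooth_comp[OF _ _ sh _ smooth_exp[of UNIV]]) auto
  have "(deriv H \<longlongrightarrow> 1 / \<alpha>) at_top" using H_facts(1) by (simp add: divide_inverse)
  moreover have "\<forall>m::nat. m \<ge> 2 \<longrightarrow> ((deriv ^^ m) H \<longlongrightarrow> 0) at_top"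
  proof (intro allI impI)
    fix m :: nat assume "m \<ge> 2"
    then obtain j where j: "m = Suc j" "j \<ge> 1" by (cases m) auto
    have "((deriv ^^ j) (deriv H) \<longlongrightarrow> 0) at_top" using hd_lim_of_Tm[OF H_facts(2) j(2)] .
    then show "((deriv ^^ m) H \<longlongrightarrow> 0) at_top" unfolding j by (simp only: funpow_Suc_right o_def)
  qed
  moreover have "\<forall>x>max 1 (exp w0). gsol (exp x) > 0" unfolding gsol_def by simp
  ultimately show ?thesis unfolding SR_def Let_def h using sg
    by (intro exI[of _ "exp w0"] exI[of _ "max 1 (exp w0)"]) auto
qed

lemma deriv_gsol: assumes "\<Lambda> > ro"
  shows "deriv gsol \<Lambda> * \<Lambda> * ln \<Lambda> / gsol \<Lambda> = deriv H (ln (ln \<Lambda>))"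
proof -
  have l: "\<Lambda> > 0" "ln \<Lambda> > 0" "ln (ln \<Lambda>) > w0" using lam[OF assms] by auto
  have dH: "(H has_field_derivative deriv H (ln (ln \<Lambda>))) (at (ln (ln \<Lambda>)))"
    using H_DERIV[OF l(3)] DERIV_imp_deriv[OF H_DERIV[OF l(3)]] by simp
  have "(gsol has_field_derivative exp (H (ln (ln \<Lambda>))) * (deriv H (ln (ln \<Lambda>)) * (inverse (ln \<Lambda>) * inverse \<Lambda>))) (at \<Lambda>)"
    unfolding gsol_def
    by (rule DERIV_chain2[OF DERIV_exp DERIV_chain2[OF dH DERIV_chain2[OF DERIV_ln DERIV_ln]]]) (use l in auto)
  then have "deriv gsol \<Lambda> = gsol \<Lambda> * (deriv H (ln (ln \<Lambda>)) * (inverse (ln \<Lambda>) * inverse \<Lambda>))"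
    unfolding gsol_def by (rule DERIV_imp_deriv)
  then show ?thesis using l by (simp add: gsol_def field_simps)
qed

lemma lim_deriv_gsol: "((\<lambda>\<Lambda>. deriv gsol \<Lambda> * \<Lambda> * ln \<Lambda> / gsol \<Lambda>) \<longlongrightarrow> 1 / \<alpha>) at_top"
proof -
  have e: "eventually (\<lambda>\<Lambda>. deriv H (ln (ln \<Lambda>)) = deriv gsol \<Lambda> * \<Lambda> * ln \<Lambda> / gsol \<Lambda>) at_top"
    using eventually_gt_at_top[of ro] by eventually_elim (simp add: deriv_gsol)
  have "((\<lambda>\<Lambda>. deriv H (ln (ln \<Lambda>))) \<longlongrightarrow> inverse \<alpha>) at_top"
    by (rule filterlim_compose[OF H_facts(1) filterlim_compose[OF ln_at_top ln_at_top]])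
  then show ?thesis using tendsto_cong[OF e] by (simp add: divide_inverse)
qed

end

context core begin

lemma dF: "z > s0 - 1 \<Longrightarrow> (F has_field_derivative deriv F z) (at z)"
  by (rule diff_DERIV[OF smooth_diff[OF s0(3)]]) simp

lemma dF': "z > s0 - 1 \<Longrightarrow> (deriv F has_field_derivative deriv (deriv F) z) (at z)"
  by (rule diff_DERIV[OF smooth_diff[OF smooth_deriv[OF s0(3)]]]) simp

lemma dK: "z > s0 - 1 \<Longrightarrow> (K has_field_derivative deriv K z) (at z)"
  by (rule diff_DERIV[OF smooth_diff[OF s0(4)]]) simp

lemma P_DERIV: assumes "z > s0 - 1" shows "(P has_field_derivative exp (F z - z) * A z) (at z)"
proof -
  have eqP: "P = (\<lambda>s. exp (F s - s) * deriv F s)" by (rule ext) (simp add: P_def)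
  have d1: "((\<lambda>s. exp (F s - s)) has_field_derivative exp (F z - z) * (deriv F z - 1)) (at z)"
    by (rule DERIV_chain2[OF DERIV_exp DERIV_diff[OF dF[OF assms] DERIV_ident]])
  have "(P has_field_derivative exp (F z - z) * (deriv F z - 1) * deriv F z + deriv (deriv F) z * exp (F z - z)) (at z)"
    unfolding eqP by (rule DERIV_mult[OF d1 dF'[OF assms]])
  then show ?thesis by (rule DERIV_cong) (simp add: A_def algebra_simps)
qed

lemma Q_DERIV: assumes "z > s0 - 1" shows "(Q has_field_derivative exp (F z) * (A z + E z * deriv K z)) (at z)"
proof -
  have eqQ: "Q = (\<lambda>s. exp (F s) * (deriv F s - 1) + exp (K s))" by (rule ext) (simp add: Q_def)
  have d1: "((\<lambda>s. exp (F s)) has_field_derivative exp (F z) * deriv F z) (at z)"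
    by (rule DERIV_chain2[OF DERIV_exp dF[OF assms]])
  have d2: "((\<lambda>s. deriv F s - 1) has_field_derivative deriv (deriv F) z - 0) (at z)"
    by (rule DERIV_diff[OF dF'[OF assms] DERIV_const])
  have d3: "((\<lambda>s. exp (K s)) has_field_derivative exp (K z) * deriv K z) (at z)"
    by (rule DERIV_chain2[OF DERIV_exp dK[OF assms]])
  have "(Q has_field_derivative exp (F z) * deriv F z * (deriv F z - 1) + (deriv (deriv F) z - 0) * exp (F z) + exp (K z) * deriv K z) (at z)"
    unfolding eqQ by (rule DERIV_add[OF DERIV_mult[OF d1 d2] d3])
  moreover have "exp (K z) = exp (F z) * E z" unfolding E_def by (simp add: exp_diff)
  ultimately show ?thesis by (simp add: A_def algebra_simps)
qed

lemma ratio: assumes "c > s0 - 1"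
  shows "exp (F c - c) * A c = exp (F c) * (A c + E c * deriv K c) * (exp (-c) * B c)"
proof -
  have pos: "A c + E c * deriv K c > 0" using s0(5) assms by blast
  have "exp (F c - c) = exp (F c) * exp (-c)" by (simp add: exp_diff exp_minus field_simps)
  then show ?thesis unfolding B_def using pos by (simp add: field_simps)
qed

lemma cmvt_lt: assumes "aa > s0" "aa < bb"
  shows "\<exists>c. aa < c \<and> c < bb \<and> P bb - P aa = (Q bb - Q aa) * (exp (-c) * B c)"
proof -
  have "\<exists>c. aa < c \<and> c < bb \<and> (P bb - P aa) * (exp (F c) * (A c + E c * deriv K c)) = (Q bb - Q aa) * (exp (F c - c) * A c)"
  proof (rule GMVT')
    show "aa < bb" by fact
    show "\<And>z. aa \<le> z \<Longrightarrow> z \<le> bb \<Longrightarrow> isCont P z"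
    proof -
      fix z assume "aa \<le> z" then have "z > s0 - 1" using assms(1) by linarith
      then show "isCont P z" using DERIV_isCont[OF P_DERIV] by blast
    qed
    show "\<And>z. aa \<le> z \<Longrightarrow> z \<le> bb \<Longrightarrow> isCont Q z"
    proof -
      fix z assume "aa \<le> z" then have "z > s0 - 1" using assms(1) by linarith
      then show "isCont Q z" using DERIV_isCont[OF Q_DERIV] by blast
    qed
    show "\<And>z. aa < z \<Longrightarrow> z < bb \<Longrightarrow> (Q has_field_derivative exp (F z) * (A z + E z * deriv K z)) (at z)"
      using Q_DERIV assms(1) by fastforce
    show "\<And>z. aa < z \<Longrightarrow> z < bb \<Longrightarrow> (P has_field_derivative exp (F z - z) * A z) (at z)"
      using P_DERIV assms(1) by fastforce
  qed
  then obtain c where c: "aa < c" "c < bb" "(P bb - P aa) * (exp (F c) * (A c + E c * deriv K c)) = (Q bb - Q aa) * (exp (F c - c) * A c)"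
    by blast
  have c1: "c > s0 - 1" using c assms by simp
  have pos0: "A c + E c * deriv K c > 0" using s0(5) c1 by blast
  have pos: "exp (F c) * (A c + E c * deriv K c) > 0" using pos0 by simp
  have "(P bb - P aa) * (exp (F c) * (A c + E c * deriv K c)) = ((Q bb - Q aa) * (exp (-c) * B c)) * (exp (F c) * (A c + E c * deriv K c))"
    using c(3)[unfolded ratio[OF c1]] by (simp only: mult_ac)
  then have "P bb - P aa = (Q bb - Q aa) * (exp (-c) * B c)" using pos pos0 by simp
  then show ?thesis using c by blast
qed

lemma cmvt: assumes "x > s0" "y > s0"
  shows "\<exists>\<sigma>. min x y \<le> \<sigma> \<and> \<sigma> \<le> max x y \<and> P y - P x = (Q y - Q x) * (exp (-\<sigma>) * B \<sigma>)"
proof (cases x y rule: linorder_cases)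
  case less
  then show ?thesis using cmvt_lt[OF assms(1) less] by (metis less_imp_le max.absorb2 min.absorb1)
next
  case equal
  then show ?thesis by (intro exI[of _ x]) simp
next
  case greater
  obtain c where c: "y < c" "c < x" "P x - P y = (Q x - Q y) * (exp (-c) * B c)" using cmvt_lt[OF assms(2) greater] by blast
  have "P y - P x = (Q y - Q x) * (exp (-c) * B c)" using c(3) by (simp add: algebra_simps)
  then show ?thesis using c greater by (intro exI[of _ c]) simp
qed

lemma psi_lip: assumes "x \<ge> s0" "y \<ge> s0" shows "\<bar>x - y\<bar> \<le> 2 / \<alpha> * \<bar>Psi x - Psi y\<bar>"
proof -
  have ap: "\<alpha> > 0" using a1 by simp
  have *: "\<bar>b' - a'\<bar> \<le> 2 / \<alpha> * \<bar>Psi b' - Psi a'\<bar>" if "s0 \<le> a'" "a' \<le> b'" for a' b'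
  proof -
    have h: "Psi b' - Psi a' \<ge> \<alpha>/2 * (b' - a')" by (rule Psi_lower[OF that])
    have g: "2 / \<alpha> * (Psi b' - Psi a') \<ge> b' - a'" using h ap by (simp add: field_simps)
    have "\<alpha>/2 * (b' - a') \<ge> 0" using ap that by simp
    then have p: "Psi b' - Psi a' \<ge> 0" using h by simp
    have "\<bar>b' - a'\<bar> = b' - a'" using that by simp
    moreover have "\<bar>Psi b' - Psi a'\<bar> = Psi b' - Psi a'" using p by simp
    ultimately show ?thesis using g by simp
  qed
  show ?thesis
  proof (cases "x \<le> y")
    case True then show ?thesis using *[OF assms(1) True] by (simp add: abs_minus_commute)
  next
    case False then show ?thesis using *[OF assms(2)] by simp
  qed
qed

lemma ev_gt_filterlim_gen: "filterlim (G :: 'a \<Rightarrow> real) at_top FF \<Longrightarrow> eventually (\<lambda>x. a < G x) FF"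
  unfolding filterlim_at_top_dense by blast

lemma ev_min_top:
  assumes "filterlim u at_top FF" "filterlim v at_top FF" "eventually (\<lambda>t. \<sigma> t \<ge> min (u t) (v t)) FF"
  shows "filterlim (\<sigma> :: 'a \<Rightarrow> real) at_top FF"
  unfolding filterlim_at_top
proof
  fix Z
  have "eventually (\<lambda>x. Z \<le> u x) FF" "eventually (\<lambda>x. Z \<le> v x) FF"
    using assms(1,2) unfolding filterlim_at_top by auto
  then show "eventually (\<lambda>x. Z \<le> \<sigma> x) FF"
    using assms(3) by eventually_elim auto
qed

lemma conv:
  fixes u v :: "'a \<Rightarrow> real"
  assumes u: "filterlim u at_top FF" and v: "filterlim v at_top FF"
    and d: "((\<lambda>t. Q (u t) - Q (v t)) \<longlongrightarrow> c) FF" and q: "filterlim (\<lambda>t. Q (u t)) at_top FF"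
  shows "((\<lambda>t. exp (u t) * (P (u t) - P (v t))) \<longlongrightarrow> c) FF"
    "((\<lambda>t. exp (v t) * (P (u t) - P (v t))) \<longlongrightarrow> c) FF"
proof -
  have ev: "eventually (\<lambda>t. u t > s0 \<and> v t > s0) FF"
    using ev_gt_filterlim_gen[OF u] ev_gt_filterlim_gen[OF v] by eventually_elim auto
  define r where "r t = (Q (u t) - Q (v t)) / Q (u t)" for t
  have r: "(r \<longlongrightarrow> 0) FF" unfolding r_def
    by (rule tendsto_divide_0[OF d filterlim_at_top_imp_at_infinity[OF q]])
  have "((\<lambda>t. - ln (1 - r t)) \<longlongrightarrow> - ln (1 - 0)) FF"
    by (intro tendsto_minus tendsto_ln tendsto_diff tendsto_const r) simp
  then have l1: "((\<lambda>t. - ln (1 - r t)) \<longlongrightarrow> 0) FF" by simp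
  have e1: "eventually (\<lambda>t. - ln (1 - r t) = Psi (u t) - Psi (v t)) FF"
    using ev
  proof eventually_elim
    case (elim t)
    have qu: "Q (u t) > 0" "Q (v t) > 0" using elim s0(5) by auto
    have "1 - r t = Q (v t) / Q (u t)" unfolding r_def using qu by (simp add: field_simps)
    then show ?case unfolding Psi_def using qu by (simp add: ln_div)
  qed
  have psi0: "((\<lambda>t. Psi (u t) - Psi (v t)) \<longlongrightarrow> 0) FF" using tendsto_cong[OF e1] l1 by simp
  have "((\<lambda>t. 2 / \<alpha> * \<bar>Psi (u t) - Psi (v t)\<bar>) \<longlongrightarrow> 2 / \<alpha> * \<bar>0\<bar>) FF"
    by (intro tendsto_mult tendsto_const tendsto_rabs psi0)
  then have l2: "((\<lambda>t. 2 / \<alpha> * \<bar>Psi (u t) - Psi (v t)\<bar>) \<longlongrightarrow> 0) FF" by simp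
  have "eventually (\<lambda>t. norm (u t - v t) \<le> 2 / \<alpha> * \<bar>Psi (u t) - Psi (v t)\<bar>) FF"
    using ev
  proof eventually_elim
    case (elim t)
    have "\<bar>u t - v t\<bar> \<le> 2 / \<alpha> * \<bar>Psi (u t) - Psi (v t)\<bar>" by (rule psi_lip) (use elim in auto)
    then show ?case by simp
  qed
  then have uv: "((\<lambda>t. u t - v t) \<longlongrightarrow> 0) FF" by (rule Lim_null_comparison[OF _ l2])
  have uv': "((\<lambda>t. \<bar>u t - v t\<bar>) \<longlongrightarrow> 0) FF" using tendsto_rabs[OF uv] by simp
  define \<sigma> where "\<sigma> t = (SOME \<sigma>. min (v t) (u t) \<le> \<sigma> \<and> \<sigma> \<le> max (v t) (u t) \<and>
       P (u t) - P (v t) = (Q (u t) - Q (v t)) * (exp (-\<sigma>) * B \<sigma>))" for t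
  have es: "eventually (\<lambda>t. min (v t) (u t) \<le> \<sigma> t \<and> \<sigma> t \<le> max (v t) (u t) \<and>
       P (u t) - P (v t) = (Q (u t) - Q (v t)) * (exp (-\<sigma> t) * B (\<sigma> t))) FF"
    using ev
  proof eventually_elim
    case (elim t)
    show ?case unfolding \<sigma>_def by (rule someI_ex[OF cmvt]) (use elim in auto)
  qed
  have stop: "filterlim \<sigma> at_top FF"
    by (rule ev_min_top[OF u v]) (use es in \<open>eventually_elim, simp add: min.commute\<close>)
  have lB: "((\<lambda>t. B (\<sigma> t)) \<longlongrightarrow> 1) FF" by (rule filterlim_compose[OF B_lim stop])
  have "eventually (\<lambda>t. norm (u t - \<sigma> t) \<le> \<bar>u t - v t\<bar>) FF"
    using es by eventually_elim auto
  then have us: "((\<lambda>t. u t - \<sigma> t) \<longlongrightarrow> 0) FF" by (rule Lim_null_comparison[OF _ uv'])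
  have "eventually (\<lambda>t. norm (v t - \<sigma> t) \<le> \<bar>u t - v t\<bar>) FF"
    using es by eventually_elim auto
  then have vs: "((\<lambda>t. v t - \<sigma> t) \<longlongrightarrow> 0) FF" by (rule Lim_null_comparison[OF _ uv'])
  have lu: "((\<lambda>t. (Q (u t) - Q (v t)) * (exp (u t - \<sigma> t) * B (\<sigma> t))) \<longlongrightarrow> c * (exp 0 * 1)) FF"
    by (intro tendsto_mult d tendsto_exp us lB)
  have lv: "((\<lambda>t. (Q (u t) - Q (v t)) * (exp (v t - \<sigma> t) * B (\<sigma> t))) \<longlongrightarrow> c * (exp 0 * 1)) FF"
    by (intro tendsto_mult d tendsto_exp vs lB)
  have eu: "eventually (\<lambda>t. (Q (u t) - Q (v t)) * (exp (u t - \<sigma> t) * B (\<sigma> t)) = exp (u t) * (P (u t) - P (v t))) FF"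
    using es
  proof eventually_elim
    case (elim t)
    have "exp (u t) * (P (u t) - P (v t)) = (Q (u t) - Q (v t)) * ((exp (u t) * exp (-\<sigma> t)) * B (\<sigma> t))"
      using elim by (simp add: mult_ac)
    moreover have "exp (u t) * exp (-\<sigma> t) = exp (u t - \<sigma> t)" by (simp add: exp_add[symmetric])
    ultimately show ?case by simp
  qed
  have ev': "eventually (\<lambda>t. (Q (u t) - Q (v t)) * (exp (v t - \<sigma> t) * B (\<sigma> t)) = exp (v t) * (P (u t) - P (v t))) FF"
    using es
  proof eventually_elim
    case (elim t)
    have "exp (v t) * (P (u t) - P (v t)) = (Q (u t) - Q (v t)) * ((exp (v t) * exp (-\<sigma> t)) * B (\<sigma> t))"
      using elim by (simp add: mult_ac)
    moreover have "exp (v t) * exp (-\<sigma> t) = exp (v t - \<sigma> t)" by (simp add: exp_add[symmetric])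
    ultimately show ?case by simp
  qed
  show "((\<lambda>t. exp (u t) * (P (u t) - P (v t))) \<longlongrightarrow> c) FF" using tendsto_cong[OF eu] lu by simp
  show "((\<lambda>t. exp (v t) * (P (u t) - P (v t))) \<longlongrightarrow> c) FF" using tendsto_cong[OF ev'] lv by simp
qed

end

lemma lnx_over_x: "((\<lambda>x::real. ln x / x) \<longlongrightarrow> 0) at_top"
  by (rule ln_x_over_x_tendsto_0)

lemma ln1p_bound: assumes "\<bar>t::real\<bar> \<le> 1/2" shows "\<bar>ln (1 + t)\<bar> \<le> 2 * \<bar>t\<bar>"
proof -
  have "\<bar>ln (1 + t) - t\<bar> \<le> 2 * t\<^sup>2" by (rule abs_ln_one_plus_x_minus_x_bound[OF assms])
  moreover have "2 * t\<^sup>2 \<le> \<bar>t\<bar>"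
  proof -
    have "2 * t\<^sup>2 = (2 * \<bar>t\<bar>) * \<bar>t\<bar>" by (simp add: power2_eq_square abs_mult_self_eq)
    also have "\<dots> \<le> 1 * \<bar>t\<bar>" using assms by (intro mult_right_mono) auto
    finally show ?thesis by simp
  qed
  moreover have "\<bar>ln (1 + t)\<bar> \<le> \<bar>ln (1 + t) - t\<bar> + \<bar>t\<bar>" using abs_triangle_ineq[of "ln (1 + t) - t" t] by simp
  ultimately show ?thesis by linarith
qed

lemma prod_bound: fixes X Bv e :: real
  assumes "\<bar>X - 1\<bar> < e" "\<bar>Bv - 1\<bar> < e" "e \<le> 1"
  shows "\<bar>X * Bv - 1\<bar> \<le> 3 * e"
proof -
  have "X * Bv - 1 = (X - 1) * Bv + (Bv - 1)" by (simp add: algebra_simps)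
  moreover have "\<bar>Bv\<bar> \<le> 2" using assms by (simp add: abs_le_iff abs_less_iff)
  moreover have "\<bar>(X - 1) * Bv\<bar> \<le> e * 2"
  proof -
    have "\<bar>(X - 1) * Bv\<bar> = \<bar>X - 1\<bar> * \<bar>Bv\<bar>" by (simp add: abs_mult)
    also have "\<dots> \<le> e * 2" using assms \<open>\<bar>Bv\<bar> \<le> 2\<close> by (intro mult_mono) auto
    finally show ?thesis .
  qed
  ultimately show ?thesis using assms(2) by (simp add: abs_le_iff abs_less_iff) 
qed

context core begin

lemma ln_ln_gt: "x > exp w0 \<Longrightarrow> ln x > w0"
proof -
  assume x: "x > exp w0"
  have "ln (exp w0) < ln x" by (subst ln_less_cancel_iff) (use x in \<open>auto intro: less_trans[OF exp_gt_zero]\<close>)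
  then show ?thesis by simp
qed

lemma part2: assumes gp: "\<gamma> > 0" and dp: "\<delta> > 0"
  shows "\<exists>z>ro. \<forall>\<Lambda>>z. \<forall>y. ln \<Lambda> powr (-\<gamma>) \<le> y \<and> y \<le> ln \<Lambda> powr \<gamma> \<longrightarrow>
     ln (y * \<Lambda>) > exp w0 \<and> H (ln (ln (y * \<Lambda>))) > s0 \<and>
     \<bar>exp (H (ln (ln \<Lambda>))) * (P (H (ln (ln (y * \<Lambda>)))) - P (H (ln (ln \<Lambda>)))) - ln y\<bar> \<le> \<delta> * \<bar>ln y\<bar>"
proof -
  have ap: "\<alpha> > 0" using a1 by simp
  define \<epsilon> where "\<epsilon> = min 1 (\<delta> / 3)"
  have ep: "\<epsilon> > 0" "\<epsilon> \<le> 1" "3 * \<epsilon> \<le> \<delta>" unfolding \<epsilon>_def using dp by auto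
  have "eventually (\<lambda>s. dist (B s) 1 < \<epsilon>) at_top" using tendstoD[OF B_lim ep(1)] .
  then obtain S where S: "\<forall>s\<ge>S. \<bar>B s - 1\<bar> < \<epsilon>" using ev_forall_ge unfolding dist_real_def by blast
  have "continuous (at 0) (exp :: real \<Rightarrow> real)" by (rule isCont_exp)
  then obtain \<eta> where eta: "\<eta> > 0" "\<forall>x'. dist x' 0 < \<eta> \<longrightarrow> dist (exp x') (exp (0::real)) < \<epsilon>"
    unfolding continuous_at_eps_delta using ep(1) by blast
  have eta2: "\<bar>x\<bar> < \<eta> \<Longrightarrow> \<bar>exp x - 1\<bar> < \<epsilon>" for x using eta(2) unfolding dist_real_def by simp
  define \<theta> where "\<theta> = min (1/2) (\<eta> * \<alpha> / 4)"
  have th: "\<theta> > 0" "\<theta> \<le> 1/2" "4 * \<theta> / \<alpha> \<le> \<eta>" unfolding \<theta>_def using eta(1) ap by (auto simp: field_simps)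
  have "((\<lambda>\<Lambda>. \<gamma> * (ln (ln \<Lambda>) / ln \<Lambda>)) \<longlongrightarrow> \<gamma> * 0) at_top"
    by (intro tendsto_mult tendsto_const filterlim_compose[OF lnx_over_x ln_at_top])
  then have E3: "eventually (\<lambda>\<Lambda>. \<gamma> * (ln (ln \<Lambda>) / ln \<Lambda>) < \<theta>) at_top"
    using order_tendstoD(2)[of _ 0 _ \<theta>] th(1) by simp
  have E2: "eventually (\<lambda>\<Lambda>. ln \<Lambda> > max 1 (2 * exp w0)) at_top"
    using ln_at_top unfolding filterlim_at_top_dense by blast
  have E4: "eventually (\<lambda>\<Lambda>. H (ln (ln \<Lambda>)) > S + \<eta>) at_top"
    using s_top unfolding filterlim_at_top_dense by blast
  have "eventually (\<lambda>\<Lambda>. \<Lambda> > ro \<and> ln \<Lambda> > max 1 (2 * exp w0) \<and> \<gamma> * (ln (ln \<Lambda>) / ln \<Lambda>) < \<theta> \<and> H (ln (ln \<Lambda>)) > S + \<eta>) at_top"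
    using eventually_gt_at_top[of ro] E2 E3 E4 by eventually_elim auto
  then obtain Z where Z: "\<forall>\<Lambda>\<ge>Z. \<Lambda> > ro \<and> ln \<Lambda> > max 1 (2 * exp w0) \<and> \<gamma> * (ln (ln \<Lambda>) / ln \<Lambda>) < \<theta> \<and> H (ln (ln \<Lambda>)) > S + \<eta>"
    using ev_forall_ge by blast
  define z where "z = max Z ro + 1"
  have zro: "z > ro" unfolding z_def by simp
  have main: "ln (y * \<Lambda>) > exp w0 \<and> H (ln (ln (y * \<Lambda>))) > s0 \<and>
     \<bar>exp (H (ln (ln \<Lambda>))) * (P (H (ln (ln (y * \<Lambda>)))) - P (H (ln (ln \<Lambda>)))) - ln y\<bar> \<le> \<delta> * \<bar>ln y\<bar>"
    if lz: "\<Lambda> > z" and ylo: "ln \<Lambda> powr (-\<gamma>) \<le> y" and yhi: "y \<le> ln \<Lambda> powr \<gamma>" for \<Lambda> y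
  proof -
    have ZL: "\<Lambda> > ro" "ln \<Lambda> > max 1 (2 * exp w0)" "\<gamma> * (ln (ln \<Lambda>) / ln \<Lambda>) < \<theta>" "H (ln (ln \<Lambda>)) > S + \<eta>"
      using Z lz unfolding z_def by auto
    define L where "L = ln \<Lambda>"
    have L: "L > 1" "L > 2 * exp w0" "\<gamma> * (ln L / L) < \<theta>" using ZL(2,3) unfolding L_def by auto
    have L0: "L > 0" using L(1) by simp
    have lL: "ln L > 0" using L(1) by simp
    have Lam0: "\<Lambda> > 0" using lam(4)[OF ZL(1)] .
    have yp: "y > 0" using ylo L0 unfolding L_def by (metis less_le_trans powr_gt_zero less_numeral_extra(3))
    have "ln (L powr (-\<gamma>)) \<le> ln y" using ylo yp L0 unfolding L_def by (subst ln_le_cancel_iff) auto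
    then have ly1: "- \<gamma> * ln L \<le> ln y" by simp
    have "ln y \<le> ln (L powr \<gamma>)" using yhi yp L0 unfolding L_def by (subst ln_le_cancel_iff) auto
    then have ly2: "ln y \<le> \<gamma> * ln L" by simp
    define uu where "uu = ln y / L"
    have "\<bar>ln y\<bar> \<le> \<gamma> * ln L" using ly1 ly2 by (simp add: abs_le_iff)
    then have "\<bar>uu\<bar> \<le> \<gamma> * (ln L / L)" unfolding uu_def using L0 by (simp add: abs_div field_simps)
    then have uu: "\<bar>uu\<bar> < \<theta>" using L(3) by simp
    then have uu2: "\<bar>uu\<bar> \<le> 1/2" using th(2) by simp
    have lyL: "ln (y * \<Lambda>) = L * (1 + uu)" unfolding uu_def L_def using yp Lam0 L0 by (simp add: ln_mult field_simps L_def)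
    have "1 + uu \<ge> 1/2" using uu2 by (simp add: abs_le_iff)
    then have "L * (1 + uu) \<ge> L * (1/2)" using L0 by (intro mult_left_mono) auto
    then have lyL2: "ln (y * \<Lambda>) \<ge> L / 2" using lyL by simp
    have c1: "ln (y * \<Lambda>) > exp w0" using lyL2 L(2) by simp
    define w where "w = ln L"
    define w' where "w' = ln (ln (y * \<Lambda>))"
    have ww: "w > w0" unfolding w_def L_def using lam(2)[OF ZL(1)] .
    have ww': "w' > w0" unfolding w'_def by (rule ln_ln_gt[OF c1])
    have "w' = ln L + ln (1 + uu)" unfolding w'_def lyL using L0 \<open>1 + uu \<ge> 1/2\<close> by (simp add: ln_mult)
    then have "\<bar>w' - w\<bar> = \<bar>ln (1 + uu)\<bar>" unfolding w_def by simp
    also have "\<dots> \<le> 2 * \<bar>uu\<bar>" by (rule ln1p_bound[OF uu2])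
    finally have dw: "\<bar>w' - w\<bar> \<le> 2 * \<bar>uu\<bar>" .
    define s where "s = H w"
    define s' where "s' = H w'"
    have ss: "s > s0" "Psi s = w" unfolding s_def using H_prop[OF ww] by auto
    have ss': "s' > s0" "Psi s' = w'" unfolding s'_def using H_prop[OF ww'] by auto
    have "\<bar>s - s'\<bar> \<le> 2 / \<alpha> * \<bar>Psi s - Psi s'\<bar>" by (rule psi_lip) (use ss ss' in auto)
    also have "\<dots> = 2 / \<alpha> * \<bar>w' - w\<bar>" using ss ss' by (simp add: abs_minus_commute)
    also have "\<dots> \<le> 2 / \<alpha> * (2 * \<bar>uu\<bar>)" using dw ap by (intro mult_left_mono) auto
    also have "\<dots> < 2 / \<alpha> * (2 * \<theta>)" using uu ap by (intro mult_strict_left_mono) auto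
    also have "\<dots> = 4 * \<theta> / \<alpha>" by simp
    also have "\<dots> \<le> \<eta>" by (rule th(3))
    finally have dss: "\<bar>s - s'\<bar> < \<eta>" .
    have Qd: "Q s' - Q s = ln y"
    proof -
      have "Q s' = exp w'" unfolding s'_def by (rule Q_H[OF ww'])
      moreover have "Q s = exp w" unfolding s_def by (rule Q_H[OF ww])
      moreover have "exp w' = ln (y * \<Lambda>)" unfolding w'_def using c1 exp_gt_zero[of w0] by (simp del: exp_gt_zero)
      moreover have "exp w = L" unfolding w_def using L0 by simp
      ultimately show ?thesis using yp Lam0 unfolding L_def by (simp add: ln_mult)
    qed
    obtain \<sigma> where sg: "min s s' \<le> \<sigma>" "\<sigma> \<le> max s s'" "P s' - P s = (Q s' - Q s) * (exp (-\<sigma>) * B \<sigma>)"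
      using cmvt[OF ss(1) ss'(1)] by blast
    have "\<bar>s - \<sigma>\<bar> \<le> \<bar>s - s'\<bar>" using sg(1,2) by (simp add: abs_le_iff min_def max_def split: if_splits)
    then have X: "\<bar>exp (s - \<sigma>) - 1\<bar> < \<epsilon>" using dss eta2 by simp
    have "\<sigma> \<ge> S"
    proof -
      have "\<sigma> \<ge> s - \<bar>s - s'\<bar>" using sg(1) by (simp add: abs_le_iff min_def split: if_splits)
      moreover have "s > S + \<eta>" unfolding s_def w_def L_def using ZL(4) .
      ultimately show ?thesis using dss by simp
    qed
    then have Bb: "\<bar>B \<sigma> - 1\<bar> < \<epsilon>" using S by blast
    have pb: "\<bar>exp (s - \<sigma>) * B \<sigma> - 1\<bar> \<le> \<delta>" using prod_bound[OF X Bb ep(2)] ep(3) by simp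
    have "exp s * (P s' - P s) - ln y = ln y * (exp (s - \<sigma>) * B \<sigma> - 1)"
    proof -
      have "exp s * (P s' - P s) = ln y * ((exp s * exp (-\<sigma>)) * B \<sigma>)" using sg(3) Qd by (simp add: mult_ac)
      moreover have "exp s * exp (-\<sigma>) = exp (s - \<sigma>)" by (simp add: exp_add[symmetric])
      ultimately show ?thesis by (simp add: algebra_simps)
    qed
    then have "\<bar>exp s * (P s' - P s) - ln y\<bar> = \<bar>ln y\<bar> * \<bar>exp (s - \<sigma>) * B \<sigma> - 1\<bar>" by (simp add: abs_mult)
    also have "\<dots> \<le> \<bar>ln y\<bar> * \<delta>" using pb by (intro mult_left_mono) auto
    finally have c3: "\<bar>exp s * (P s' - P s) - ln y\<bar> \<le> \<delta> * \<bar>ln y\<bar>" by (simp add: mult.commute)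
    show ?thesis using c1 ss'(1) c3 unfolding s_def s'_def w_def w'_def L_def by simp
  qed
  show ?thesis using zro main by blast
qed

end

lemma mk_core:
  assumes "\<alpha> > 1" "b < \<alpha>" "SR \<alpha> f" "SR b k"
  obtains T0 where "core (\<lambda>u. ln (f (exp u))) (\<lambda>u. ln (k (exp u))) \<alpha> b"
    "\<forall>u>T0. f (exp u) > 0 \<and> k (exp u) > 0 \<and> deriv f (exp u) = exp (ln (f (exp u)) - u) * deriv (\<lambda>u. ln (f (exp u))) u"
proof -
  obtain zf where zf: "zf \<ge> 1" "\<forall>x>zf. f x > 0" "smooth_on_set {zf<..} f"
    "smooth_on_set {ln zf<..} (\<lambda>u. ln (f (exp u)))"
    "(deriv (\<lambda>u. ln (f (exp u))) \<longlongrightarrow> \<alpha>) at_top" "\<forall>n. Tm n (deriv (\<lambda>u. ln (f (exp u))))"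
    "\<forall>u>ln zf. deriv f (exp u) = exp (ln (f (exp u)) - u) * deriv (\<lambda>u. ln (f (exp u))) u"
    by (rule SR_unpack[OF assms(3)])
  obtain zk where zk: "zk \<ge> 1" "\<forall>x>zk. k x > 0" "smooth_on_set {zk<..} k"
    "smooth_on_set {ln zk<..} (\<lambda>u. ln (k (exp u)))"
    "(deriv (\<lambda>u. ln (k (exp u))) \<longlongrightarrow> b) at_top" "\<forall>n. Tm n (deriv (\<lambda>u. ln (k (exp u))))"
    "\<forall>u>ln zk. deriv k (exp u) = exp (ln (k (exp u)) - u) * deriv (\<lambda>u. ln (k (exp u))) u"
    by (rule SR_unpack[OF assms(4)])
  define T0 where "T0 = max (ln zf) (ln zk)"
  have sf: "sm (\<lambda>u. ln (f (exp u)))" unfolding sm_def using zf(4) by (intro exI[of _ "ln zf"])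
  have sk: "sm (\<lambda>u. ln (k (exp u)))" unfolding sm_def using zk(4) by (intro exI[of _ "ln zk"])
  have c: "core (\<lambda>u. ln (f (exp u))) (\<lambda>u. ln (k (exp u))) \<alpha> b"
    unfolding core_def by (intro conjI assms(1,2) sf sk zf(5,6) zk(5,6))
  have ex: "exp u > z" if "u > ln z" "z \<ge> 1" for u z :: real
  proof -
    have "exp (ln z) < exp u" using that(1) by (simp only: exp_less_cancel_iff)
    then show ?thesis using that(2) by simp
  qed
  have "\<forall>u>T0. f (exp u) > 0 \<and> k (exp u) > 0 \<and> deriv f (exp u) = exp (ln (f (exp u)) - u) * deriv (\<lambda>u. ln (f (exp u))) u"
  proof (intro allI impI conjI)
    fix u assume u: "u > T0"
    then have u1: "u > ln zf" "u > ln zk" unfolding T0_def by auto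
    show "f (exp u) > 0" using zf(2) ex[OF u1(1) zf(1)] by blast
    show "k (exp u) > 0" using zk(2) ex[OF u1(2) zk(1)] by blast
    show "deriv f (exp u) = exp (ln (f (exp u)) - u) * deriv (\<lambda>u. ln (f (exp u))) u" using zf(7) u1(1) by blast
  qed
  then show ?thesis by (rule that[OF c])
qed

context core begin

definition linked where "linked f k \<longleftrightarrow> F = (\<lambda>u. ln (f (exp u))) \<and> K = (\<lambda>u. ln (k (exp u))) \<and>
   (\<forall>u>T0. f (exp u) > 0 \<and> k (exp u) > 0 \<and> deriv f (exp u) = exp (ln (f (exp u)) - u) * deriv (\<lambda>u. ln (f (exp u))) u)"

lemma link: assumes "linked f k" "u > T0"
  shows "exp u * deriv f (exp u) - f (exp u) + k (exp u) = Q u" "deriv f (exp u) = P u"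
    "f (exp u) = exp (F u)" "k (exp u) = exp (K u)"
proof -
  have L: "F = (\<lambda>u. ln (f (exp u)))" "K = (\<lambda>u. ln (k (exp u)))" "f (exp u) > 0" "k (exp u) > 0"
     "deriv f (exp u) = exp (ln (f (exp u)) - u) * deriv (\<lambda>u. ln (f (exp u))) u"
    using assms unfolding linked_def by auto
  show f: "f (exp u) = exp (F u)" using L by simp
  show k: "k (exp u) = exp (K u)" using L by simp
  show d: "deriv f (exp u) = P u" unfolding P_def using L by simp
  have "exp u * P u = exp (F u) * deriv F u" unfolding P_def by (simp add: exp_diff)
  then show "exp u * deriv f (exp u) - f (exp u) + k (exp u) = Q u" unfolding d f k Q_def by (simp add: algebra_simps)
qed

lemma gsol_exp: "gsol \<Lambda> = exp (H (ln (ln \<Lambda>)))" unfolding gsol_def ..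

lemma ln_gt_of_exp: fixes x a :: real assumes "x > exp a" shows "x > 0" "ln x > a"
proof -
  show x0: "x > 0" using assms exp_gt_zero[of a] by linarith
  have "ln (exp a) < ln x" by (subst ln_less_cancel_iff) (use assms x0 in auto)
  then show "ln x > a" by simp
qed

lemma sol_eq_iff: assumes "linked f k" "x > exp s0"
  shows "sol_eq f k \<Lambda> x \<longleftrightarrow> Q (ln x) = ln \<Lambda>"
proof -
  have x0: "x > 0" using ln_gt_of_exp[OF assms(2)] by simp
  have "ln x > s0" using ln_gt_of_exp[OF assms(2)] by simp
  then have "ln x > T0" using s0(1) by simp
  then have "exp (ln x) * deriv f (exp (ln x)) - f (exp (ln x)) + k (exp (ln x)) = Q (ln x)" by (rule link(1)[OF assms(1)])
  then show ?thesis unfolding sol_eq_def using x0 by simp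
qed

lemma is_sol_gsol: assumes "linked f k" shows "is_sol f k ro (exp s0) gsol"
  unfolding is_sol_def
proof (intro allI impI)
  fix \<Lambda> assume l: "\<Lambda> > ro"
  have s: "ln (gsol \<Lambda>) > s0" "Q (ln (gsol \<Lambda>)) = ln \<Lambda>" using sol[OF l] by auto
  have g0: "gsol \<Lambda> > 0" unfolding gsol_def by simp
  have "exp (ln (gsol \<Lambda>)) > exp s0" using s(1) by simp
  then have gx: "gsol \<Lambda> > exp s0" using g0 by simp
  have se: "sol_eq f k \<Lambda> (gsol \<Lambda>)" using sol_eq_iff[OF assms gx] s(2) by simp
  have un: "\<forall>x>exp s0. sol_eq f k \<Lambda> x \<longrightarrow> x = gsol \<Lambda>"
  proof (intro allI impI)
    fix x assume x: "x > exp s0" "sol_eq f k \<Lambda> x"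
    have x0: "x > 0" using ln_gt_of_exp[OF x(1)] by simp
    have "ln x > s0" using ln_gt_of_exp[OF x(1)] by simp
    moreover have "Q (ln x) = ln \<Lambda>" using sol_eq_iff[OF assms x(1)] x(2) by simp
    ultimately have "ln x = H (ln (ln \<Lambda>))" by (rule uniq[OF l])
    then have "exp (ln x) = gsol \<Lambda>" unfolding gsol_def by simp
    then show "x = gsol \<Lambda>" using x0 by simp
  qed
  show "exp s0 < gsol \<Lambda> \<and> sol_eq f k \<Lambda> (gsol \<Lambda>) \<and> (\<forall>x>exp s0. sol_eq f k \<Lambda> x \<longrightarrow> x = gsol \<Lambda>)"
    using gx se un by blast
qed

lemma gsol_top: "filterlim gsol at_top at_top"
proof -
  have "filterlim (\<lambda>\<Lambda>. exp (H (ln (ln \<Lambda>)))) at_top at_top"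
    by (rule filterlim_compose[OF exp_at_top s_top])
  then show ?thesis unfolding gsol_def .
qed

lemma ev_sol: assumes "linked f k" "is_sol f k r x g'"
  shows "eventually (\<lambda>\<Lambda>. g' \<Lambda> = gsol \<Lambda>) at_top"
  using eventually_gt_at_top[of "max r ro"] ev_gt_filterlim[OF gsol_top, of "max x (exp s0)"]
proof eventually_elim
  case (elim \<Lambda>)
  have l: "\<Lambda> > r" "\<Lambda> > ro" using elim by auto
  have gx: "gsol \<Lambda> > exp s0" "gsol \<Lambda> > x" using elim by auto
  have "sol_eq f k \<Lambda> (gsol \<Lambda>)" using is_sol_gsol[OF assms(1)] l(2) unfolding is_sol_def by blast
  moreover have "\<forall>y>x. sol_eq f k \<Lambda> y \<longrightarrow> y = g' \<Lambda>" using assms(2) l(1) unfolding is_sol_def by blast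
  ultimately show ?case using gx(2) by simp
qed

lemma lim_parts: assumes "linked f k"
  shows "((\<lambda>\<Lambda>. f (gsol \<Lambda>) / ln \<Lambda>) \<longlongrightarrow> 1 / (\<alpha> - 1)) at_top"
    "((\<lambda>\<Lambda>. gsol \<Lambda> * deriv f (gsol \<Lambda>) / ln \<Lambda>) \<longlongrightarrow> \<alpha> / (\<alpha> - 1)) at_top"
    "((\<lambda>\<Lambda>. (gsol \<Lambda> * deriv f (gsol \<Lambda>) - f (gsol \<Lambda>)) / ln \<Lambda>) \<longlongrightarrow> 1) at_top"
proof -
  define s where "s \<Lambda> = H (ln (ln \<Lambda>))" for \<Lambda>
  have ev: "eventually (\<lambda>\<Lambda>. f (gsol \<Lambda>) = exp (F (s \<Lambda>)) \<and> gsol \<Lambda> * deriv f (gsol \<Lambda>) = exp (F (s \<Lambda>)) * deriv F (s \<Lambda>)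
      \<and> ln \<Lambda> = exp (F (s \<Lambda>)) * W (s \<Lambda>) \<and> W (s \<Lambda>) > 0) at_top"
    using eventually_gt_at_top[of ro]
  proof eventually_elim
    case (elim \<Lambda>)
    have s: "s \<Lambda> > s0" "Q (s \<Lambda>) = ln \<Lambda>" using sol[OF elim] unfolding gsol_def s_def by auto
    have T: "s \<Lambda> > T0" using s(1) s0(1) by simp
    have g: "gsol \<Lambda> = exp (s \<Lambda>)" unfolding gsol_def s_def ..
    have "exp (s \<Lambda>) * P (s \<Lambda>) = exp (F (s \<Lambda>)) * deriv F (s \<Lambda>)" unfolding P_def by (simp add: exp_diff)
    then show ?case unfolding g using link[OF assms T] s(2) Q_eq W_pos[of "s \<Lambda>"] s(1) by simp
  qed
  have lW: "((\<lambda>\<Lambda>. W (s \<Lambda>)) \<longlongrightarrow> \<alpha> - 1) at_top" unfolding s_def by (rule lim_s[OF W_facts(2)])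
  have lF: "((\<lambda>\<Lambda>. deriv F (s \<Lambda>)) \<longlongrightarrow> \<alpha>) at_top" unfolding s_def by (rule lim_s[OF lF])
  have a0: "\<alpha> - 1 \<noteq> 0" using a1 by simp
  have e1: "eventually (\<lambda>\<Lambda>. 1 / W (s \<Lambda>) = f (gsol \<Lambda>) / ln \<Lambda>) at_top"
    using ev by eventually_elim auto
  have "((\<lambda>\<Lambda>. 1 / W (s \<Lambda>)) \<longlongrightarrow> 1 / (\<alpha> - 1)) at_top" by (intro tendsto_divide tendsto_const lW a0)
  then show "((\<lambda>\<Lambda>. f (gsol \<Lambda>) / ln \<Lambda>) \<longlongrightarrow> 1 / (\<alpha> - 1)) at_top" using tendsto_cong[OF e1] by simp
  have e2: "eventually (\<lambda>\<Lambda>. deriv F (s \<Lambda>) / W (s \<Lambda>) = gsol \<Lambda> * deriv f (gsol \<Lambda>) / ln \<Lambda>) at_top"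
    using ev by eventually_elim auto
  have "((\<lambda>\<Lambda>. deriv F (s \<Lambda>) / W (s \<Lambda>)) \<longlongrightarrow> \<alpha> / (\<alpha> - 1)) at_top" by (intro tendsto_divide lF lW a0)
  then show "((\<lambda>\<Lambda>. gsol \<Lambda> * deriv f (gsol \<Lambda>) / ln \<Lambda>) \<longlongrightarrow> \<alpha> / (\<alpha> - 1)) at_top" using tendsto_cong[OF e2] by simp
  have e3: "eventually (\<lambda>\<Lambda>. (deriv F (s \<Lambda>) - 1) / W (s \<Lambda>) = (gsol \<Lambda> * deriv f (gsol \<Lambda>) - f (gsol \<Lambda>)) / ln \<Lambda>) at_top"
    using ev by eventually_elim (auto simp: field_simps)
  have "((\<lambda>\<Lambda>. (deriv F (s \<Lambda>) - 1) / W (s \<Lambda>)) \<longlongrightarrow> (\<alpha> - 1) / (\<alpha> - 1)) at_top"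
    by (intro tendsto_divide tendsto_diff lF tendsto_const lW a0)
  then show "((\<lambda>\<Lambda>. (gsol \<Lambda> * deriv f (gsol \<Lambda>) - f (gsol \<Lambda>)) / ln \<Lambda>) \<longlongrightarrow> 1) at_top"
    using tendsto_cong[OF e3] a0 by simp
qed

lemma part2_f: assumes "linked f k" "\<gamma> > 0" "\<delta> > 0"
  shows "\<exists>z>ro. \<forall>\<Lambda>>z. \<forall>y. ln \<Lambda> powr (-\<gamma>) \<le> y \<and> y \<le> ln \<Lambda> powr \<gamma> \<longrightarrow>
            \<bar>gsol \<Lambda> * (deriv f (gsol (y * \<Lambda>)) - deriv f (gsol \<Lambda>)) - ln y\<bar> \<le> \<delta> * \<bar>ln y\<bar>"
proof -
  obtain z where z: "z > ro" "\<forall>\<Lambda>>z. \<forall>y. ln \<Lambda> powr (-\<gamma>) \<le> y \<and> y \<le> ln \<Lambda> powr \<gamma> \<longrightarrow>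
     ln (y * \<Lambda>) > exp w0 \<and> H (ln (ln (y * \<Lambda>))) > s0 \<and>
     \<bar>exp (H (ln (ln \<Lambda>))) * (P (H (ln (ln (y * \<Lambda>)))) - P (H (ln (ln \<Lambda>)))) - ln y\<bar> \<le> \<delta> * \<bar>ln y\<bar>"
    using part2[OF assms(2,3)] by blast
  have "\<forall>\<Lambda>>z. \<forall>y. ln \<Lambda> powr (-\<gamma>) \<le> y \<and> y \<le> ln \<Lambda> powr \<gamma> \<longrightarrow>
            \<bar>gsol \<Lambda> * (deriv f (gsol (y * \<Lambda>)) - deriv f (gsol \<Lambda>)) - ln y\<bar> \<le> \<delta> * \<bar>ln y\<bar>"
  proof (intro allI impI)
    fix \<Lambda> y assume l: "\<Lambda> > z" and y: "ln \<Lambda> powr (-\<gamma>) \<le> y \<and> y \<le> ln \<Lambda> powr \<gamma>"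
    have h: "H (ln (ln (y * \<Lambda>))) > s0" "\<bar>exp (H (ln (ln \<Lambda>))) * (P (H (ln (ln (y * \<Lambda>)))) - P (H (ln (ln \<Lambda>)))) - ln y\<bar> \<le> \<delta> * \<bar>ln y\<bar>"
      using z(2) l y by auto
    have lr: "\<Lambda> > ro" using l z(1) by simp
    have h2: "H (ln (ln \<Lambda>)) > s0" using sol(1)[OF lr] unfolding gsol_def by simp
    have d1: "deriv f (gsol (y * \<Lambda>)) = P (H (ln (ln (y * \<Lambda>))))" unfolding gsol_def
      by (rule link(2)[OF assms(1)]) (use h(1) s0(1) in simp)
    have d2: "deriv f (gsol \<Lambda>) = P (H (ln (ln \<Lambda>)))" unfolding gsol_def
      by (rule link(2)[OF assms(1)]) (use h2 s0(1) in simp)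
    show "\<bar>gsol \<Lambda> * (deriv f (gsol (y * \<Lambda>)) - deriv f (gsol \<Lambda>)) - ln y\<bar> \<le> \<delta> * \<bar>ln y\<bar>"
      unfolding d1 d2 using h(2) unfolding gsol_def by simp
  qed
  then show ?thesis using z(1) by blast
qed

end

theorem lemma2p2:
  fixes \<alpha> b :: real and f :: "real \<Rightarrow> real"
  assumes "\<alpha> > 1" and "SR \<alpha> f" and "b < \<alpha>"
  shows "(\<forall>k. SR b k \<longrightarrow>
      (\<exists>ro xo g. ro > 0 \<and> is_sol f k ro xo g \<and> SR 0 g \<and> SR (1 / \<alpha>) (\<lambda>u. g (exp u)) \<and>
        (\<forall>\<gamma>>0. \<forall>\<delta>>0. \<exists>z>ro. \<forall>\<Lambda>>z. \<forall>y.
            ln \<Lambda> powr (-\<gamma>) \<le> y \<and> y \<le> ln \<Lambda> powr \<gamma> \<longrightarrow>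
            \<bar>g \<Lambda> * (deriv f (g (y * \<Lambda>)) - deriv f (g \<Lambda>)) - ln y\<bar> \<le> \<delta> * \<bar>ln y\<bar>) \<and>
        ((\<lambda>\<Lambda>. deriv g \<Lambda> * \<Lambda> * ln \<Lambda> / g \<Lambda>) \<longlongrightarrow> 1 / \<alpha>) at_top \<and>
        ((\<lambda>\<Lambda>. f (g \<Lambda>) / ln \<Lambda>) \<longlongrightarrow> 1 / (\<alpha> - 1)) at_top \<and>
        ((\<lambda>\<Lambda>. g \<Lambda> * deriv f (g \<Lambda>) / ln \<Lambda>) \<longlongrightarrow> \<alpha> / (\<alpha> - 1)) at_top \<and>
        ((\<lambda>\<Lambda>. (g \<Lambda> * deriv f (g \<Lambda>) - f (g \<Lambda>)) / ln \<Lambda>) \<longlongrightarrow> 1) at_top))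
    \<and>
    (\<forall>k0 k1 c g0 g1 r0 r1 x0 x1. SR b k0 \<and> SR b k1 \<and>
        ((\<lambda>\<Lambda>. k1 \<Lambda> - k0 \<Lambda>) \<longlongrightarrow> c) at_top \<and>
        is_sol f k0 r0 x0 g0 \<and> is_sol f k1 r1 x1 g1 \<longrightarrow>
        ((\<lambda>\<Lambda>. g0 \<Lambda> * (deriv f (g0 \<Lambda>) - deriv f (g1 \<Lambda>))) \<longlongrightarrow> c) at_top \<and>
        ((\<lambda>\<Lambda>. g1 \<Lambda> * (deriv f (g0 \<Lambda>) - deriv f (g1 \<Lambda>))) \<longlongrightarrow> c) at_top)"
proof -
  have part1: "\<forall>k. SR b k \<longrightarrow>
      (\<exists>ro xo g. ro > 0 \<and> is_sol f k ro xo g \<and> SR 0 g \<and> SR (1 / \<alpha>) (\<lambda>u. g (exp u)) \<and>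
        (\<forall>\<gamma>>0. \<forall>\<delta>>0. \<exists>z>ro. \<forall>\<Lambda>>z. \<forall>y.
            ln \<Lambda> powr (-\<gamma>) \<le> y \<and> y \<le> ln \<Lambda> powr \<gamma> \<longrightarrow>
            \<bar>g \<Lambda> * (deriv f (g (y * \<Lambda>)) - deriv f (g \<Lambda>)) - ln y\<bar> \<le> \<delta> * \<bar>ln y\<bar>) \<and>
        ((\<lambda>\<Lambda>. deriv g \<Lambda> * \<Lambda> * ln \<Lambda> / g \<Lambda>) \<longlongrightarrow> 1 / \<alpha>) at_top \<and>
        ((\<lambda>\<Lambda>. f (g \<Lambda>) / ln \<Lambda>) \<longlongrightarrow> 1 / (\<alpha> - 1)) at_top \<and>
        ((\<lambda>\<Lambda>. g \<Lambda> * deriv f (g \<Lambda>) / ln \<Lambda>) \<longlongrightarrow> \<alpha> / (\<alpha> - 1)) at_top \<and>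
        ((\<lambda>\<Lambda>. (g \<Lambda> * deriv f (g \<Lambda>) - f (g \<Lambda>)) / ln \<Lambda>) \<longlongrightarrow> 1) at_top)"
  proof (intro allI impI)
    fix k assume k: "SR b k"
    obtain T0 where c: "core (\<lambda>u. ln (f (exp u))) (\<lambda>u. ln (k (exp u))) \<alpha> b"
      and lk: "\<forall>u>T0. f (exp u) > 0 \<and> k (exp u) > 0 \<and> deriv f (exp u) = exp (ln (f (exp u)) - u) * deriv (\<lambda>u. ln (f (exp u))) u"
      by (rule mk_core[OF assms(1) assms(3) assms(2) k])
    interpret C: core "\<lambda>u. ln (f (exp u))" "\<lambda>u. ln (k (exp u))" \<alpha> b T0 by (rule c)
    have L: "C.linked f k" unfolding C.linked_def using lk by simp
    have p2: "\<forall>\<gamma>>0. \<forall>\<delta>>0. \<exists>z>C.ro. \<forall>\<Lambda>>z. \<forall>y.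
            ln \<Lambda> powr (-\<gamma>) \<le> y \<and> y \<le> ln \<Lambda> powr \<gamma> \<longrightarrow>
            \<bar>C.gsol \<Lambda> * (deriv f (C.gsol (y * \<Lambda>)) - deriv f (C.gsol \<Lambda>)) - ln y\<bar> \<le> \<delta> * \<bar>ln y\<bar>"
    proof (intro allI impI)
      fix \<gamma> \<delta> :: real assume "\<gamma> > 0" "\<delta> > 0"
      then show "\<exists>z>C.ro. \<forall>\<Lambda>>z. \<forall>y.
            ln \<Lambda> powr (-\<gamma>) \<le> y \<and> y \<le> ln \<Lambda> powr \<gamma> \<longrightarrow>
            \<bar>C.gsol \<Lambda> * (deriv f (C.gsol (y * \<Lambda>)) - deriv f (C.gsol \<Lambda>)) - ln y\<bar> \<le> \<delta> * \<bar>ln y\<bar>"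
        by (rule C.part2_f[OF L])
    qed
    show "\<exists>ro xo g. ro > 0 \<and> is_sol f k ro xo g \<and> SR 0 g \<and> SR (1 / \<alpha>) (\<lambda>u. g (exp u)) \<and>
        (\<forall>\<gamma>>0. \<forall>\<delta>>0. \<exists>z>ro. \<forall>\<Lambda>>z. \<forall>y.
            ln \<Lambda> powr (-\<gamma>) \<le> y \<and> y \<le> ln \<Lambda> powr \<gamma> \<longrightarrow>
            \<bar>g \<Lambda> * (deriv f (g (y * \<Lambda>)) - deriv f (g \<Lambda>)) - ln y\<bar> \<le> \<delta> * \<bar>ln y\<bar>) \<and>
        ((\<lambda>\<Lambda>. deriv g \<Lambda> * \<Lambda> * ln \<Lambda> / g \<Lambda>) \<longlongrightarrow> 1 / \<alpha>) at_top \<and>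
        ((\<lambda>\<Lambda>. f (g \<Lambda>) / ln \<Lambda>) \<longlongrightarrow> 1 / (\<alpha> - 1)) at_top \<and>
        ((\<lambda>\<Lambda>. g \<Lambda> * deriv f (g \<Lambda>) / ln \<Lambda>) \<longlongrightarrow> \<alpha> / (\<alpha> - 1)) at_top \<and>
        ((\<lambda>\<Lambda>. (g \<Lambda> * deriv f (g \<Lambda>) - f (g \<Lambda>)) / ln \<Lambda>) \<longlongrightarrow> 1) at_top"
      by (intro exI[of _ C.ro] exI[of _ "exp C.s0"] exI[of _ C.gsol] conjI C.ro_pos C.is_sol_gsol[OF L] C.SR0 C.SR1
          p2 C.lim_deriv_gsol C.lim_parts[OF L])
  qed
  have part4: "\<forall>k0 k1 c g0 g1 r0 r1 x0 x1. SR b k0 \<and> SR b k1 \<and>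
        ((\<lambda>\<Lambda>. k1 \<Lambda> - k0 \<Lambda>) \<longlongrightarrow> c) at_top \<and>
        is_sol f k0 r0 x0 g0 \<and> is_sol f k1 r1 x1 g1 \<longrightarrow>
        ((\<lambda>\<Lambda>. g0 \<Lambda> * (deriv f (g0 \<Lambda>) - deriv f (g1 \<Lambda>))) \<longlongrightarrow> c) at_top \<and>
        ((\<lambda>\<Lambda>. g1 \<Lambda> * (deriv f (g0 \<Lambda>) - deriv f (g1 \<Lambda>))) \<longlongrightarrow> c) at_top"
  proof (intro allI impI)
    fix k0 k1 c g0 g1 r0 r1 x0 x1
    assume h: "SR b k0 \<and> SR b k1 \<and> ((\<lambda>\<Lambda>. k1 \<Lambda> - k0 \<Lambda>) \<longlongrightarrow> c) at_top \<and>
        is_sol f k0 r0 x0 g0 \<and> is_sol f k1 r1 x1 g1"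
    have hk0: "SR b k0" and hk1: "SR b k1" and hc: "((\<lambda>\<Lambda>. k1 \<Lambda> - k0 \<Lambda>) \<longlongrightarrow> c) at_top"
      and hs0: "is_sol f k0 r0 x0 g0" and hs1: "is_sol f k1 r1 x1 g1" using h by auto
    obtain T0 where c0: "core (\<lambda>u. ln (f (exp u))) (\<lambda>u. ln (k0 (exp u))) \<alpha> b"
      and lk0: "\<forall>u>T0. f (exp u) > 0 \<and> k0 (exp u) > 0 \<and> deriv f (exp u) = exp (ln (f (exp u)) - u) * deriv (\<lambda>u. ln (f (exp u))) u"
      by (rule mk_core[OF assms(1) assms(3) assms(2) hk0])
    obtain T1 where c1: "core (\<lambda>u. ln (f (exp u))) (\<lambda>u. ln (k1 (exp u))) \<alpha> b"
      and lk1: "\<forall>u>T1. f (exp u) > 0 \<and> k1 (exp u) > 0 \<and> deriv f (exp u) = exp (ln (f (exp u)) - u) * deriv (\<lambda>u. ln (f (exp u))) u"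
      by (rule mk_core[OF assms(1) assms(3) assms(2) hk1])
    interpret C0: core "\<lambda>u. ln (f (exp u))" "\<lambda>u. ln (k0 (exp u))" \<alpha> b T0 by (rule c0)
    interpret C1: core "\<lambda>u. ln (f (exp u))" "\<lambda>u. ln (k1 (exp u))" \<alpha> b T1 by (rule c1)
    have L0: "C0.linked f k0" unfolding C0.linked_def using lk0 by simp
    have L1: "C1.linked f k1" unfolding C1.linked_def using lk1 by simp
    have e0: "eventually (\<lambda>\<Lambda>. g0 \<Lambda> = C0.gsol \<Lambda>) at_top" by (rule C0.ev_sol[OF L0 hs0])
    have e1: "eventually (\<lambda>\<Lambda>. g1 \<Lambda> = C1.gsol \<Lambda>) at_top" by (rule C1.ev_sol[OF L1 hs1])
    define u where "u \<Lambda> = C0.H (ln (ln \<Lambda>))" for \<Lambda>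
    define v where "v \<Lambda> = C1.H (ln (ln \<Lambda>))" for \<Lambda>
    have utop: "filterlim u at_top at_top" unfolding u_def by (rule C0.s_top)
    have vtop: "filterlim v at_top at_top" unfolding v_def by (rule C1.s_top)
    have ev: "eventually (\<lambda>\<Lambda>. C0.Q (u \<Lambda>) = ln \<Lambda> \<and> C0.Q (u \<Lambda>) - C0.Q (v \<Lambda>) = k1 (exp (v \<Lambda>)) - k0 (exp (v \<Lambda>))
        \<and> deriv f (exp (u \<Lambda>)) = C0.P (u \<Lambda>) \<and> deriv f (exp (v \<Lambda>)) = C0.P (v \<Lambda>)
        \<and> g0 \<Lambda> = exp (u \<Lambda>) \<and> g1 \<Lambda> = exp (v \<Lambda>)) at_top"
      using eventually_gt_at_top[of "max C0.ro C1.ro"] ev_gt_filterlim[OF utop, of "max T0 T1"]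
        ev_gt_filterlim[OF vtop, of "max T0 T1"] e0 e1
    proof eventually_elim
      case (elim \<Lambda>)
      have l0: "\<Lambda> > C0.ro" and l1: "\<Lambda> > C1.ro" using elim by auto
      have q0: "C0.Q (u \<Lambda>) = ln \<Lambda>" using C0.sol(2)[OF l0] unfolding C0.gsol_def u_def by simp
      have q1: "C1.Q (v \<Lambda>) = ln \<Lambda>" using C1.sol(2)[OF l1] unfolding C1.gsol_def v_def by simp
      have uT: "u \<Lambda> > T0" and vT0: "v \<Lambda> > T0" and vT1: "v \<Lambda> > T1" using elim by auto
      have a: "exp (v \<Lambda>) * deriv f (exp (v \<Lambda>)) - f (exp (v \<Lambda>)) + k0 (exp (v \<Lambda>)) = C0.Q (v \<Lambda>)"
        by (rule C0.link(1)[OF L0 vT0])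
      have b: "exp (v \<Lambda>) * deriv f (exp (v \<Lambda>)) - f (exp (v \<Lambda>)) + k1 (exp (v \<Lambda>)) = C1.Q (v \<Lambda>)"
        by (rule C1.link(1)[OF L1 vT1])
      have "C0.Q (u \<Lambda>) - C0.Q (v \<Lambda>) = k1 (exp (v \<Lambda>)) - k0 (exp (v \<Lambda>))" using a b q0 q1 by simp
      moreover have "deriv f (exp (u \<Lambda>)) = C0.P (u \<Lambda>)" by (rule C0.link(2)[OF L0 uT])
      moreover have "deriv f (exp (v \<Lambda>)) = C0.P (v \<Lambda>)" by (rule C0.link(2)[OF L0 vT0])
      moreover have "g0 \<Lambda> = exp (u \<Lambda>)" using elim unfolding C0.gsol_def u_def by simp
      moreover have "g1 \<Lambda> = exp (v \<Lambda>)" using elim unfolding C1.gsol_def v_def by simp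
      ultimately show ?case using q0 by simp
    qed
    have "((\<lambda>\<Lambda>. k1 (exp (v \<Lambda>)) - k0 (exp (v \<Lambda>))) \<longlongrightarrow> c) at_top"
      by (rule filterlim_compose[OF hc filterlim_compose[OF exp_at_top vtop]])
    moreover have ed: "eventually (\<lambda>\<Lambda>. k1 (exp (v \<Lambda>)) - k0 (exp (v \<Lambda>)) = C0.Q (u \<Lambda>) - C0.Q (v \<Lambda>)) at_top"
      using ev by eventually_elim simp
    ultimately have d: "((\<lambda>\<Lambda>. C0.Q (u \<Lambda>) - C0.Q (v \<Lambda>)) \<longlongrightarrow> c) at_top" using tendsto_cong[OF ed] by simp
    have "eventually (\<lambda>\<Lambda>. ln \<Lambda> = C0.Q (u \<Lambda>)) at_top" using ev by eventually_elim simp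
    then have q: "filterlim (\<lambda>\<Lambda>. C0.Q (u \<Lambda>)) at_top at_top"
      using filterlim_cong[OF refl refl, of ln "\<lambda>\<Lambda>. C0.Q (u \<Lambda>)" at_top at_top] ln_at_top by simp
    have r: "((\<lambda>t. exp (u t) * (C0.P (u t) - C0.P (v t))) \<longlongrightarrow> c) at_top"
      "((\<lambda>t. exp (v t) * (C0.P (u t) - C0.P (v t))) \<longlongrightarrow> c) at_top"
      using C0.conv[OF utop vtop d q] by auto
    have f1: "eventually (\<lambda>t. exp (u t) * (C0.P (u t) - C0.P (v t)) = g0 t * (deriv f (g0 t) - deriv f (g1 t))) at_top"
      using ev by eventually_elim simp
    have f2: "eventually (\<lambda>t. exp (v t) * (C0.P (u t) - C0.P (v t)) = g1 t * (deriv f (g0 t) - deriv f (g1 t))) at_top"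
      using ev by eventually_elim simp
    show "((\<lambda>\<Lambda>. g0 \<Lambda> * (deriv f (g0 \<Lambda>) - deriv f (g1 \<Lambda>))) \<longlongrightarrow> c) at_top \<and>
        ((\<lambda>\<Lambda>. g1 \<Lambda> * (deriv f (g0 \<Lambda>) - deriv f (g1 \<Lambda>))) \<longlongrightarrow> c) at_top"
      using tendsto_cong[OF f1] tendsto_cong[OF f2] r by simp
  qed
  show ?thesis by (rule conjI[OF part1 part4])
qed

end
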